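(* Fix $T>0$ and $d\in\{1,2,3\}$. There is a constant $\tilde C_u^{(d)}$ depending only on $d$ and $T$ such that $$\int_0^t\int_{\mathbb R^d}\big|K^{\mathrm{LKS}}_{t-s;x}-K^{\mathrm{LKS}}_{r-s;x}\big|^2dx\,ds\le\tilde C_u^{(d)}(t-r)^{\frac{4-d}{4}},\qquad 0<r<t\le T,$$ with the convention $K^{\mathrm{LKS}}_{t;x}=0$ for $t<0$. The same estimate holds, with a possibly different constant, with $K^{\mathrm{LKS}}$ replaced by $K^{\mathrm{SFO}}$.
   Context: $K^{\mathrm{LKS}}_{t;x}=(2\pi)^{-d}\int_{\mathbb R^d}e^{-\frac t8(-2+|\xi|^2)^2}\cos(\xi\cdot x)d\xi$ and $K^{\mathrm{SFO}}_{t;x}=(2\pi)^{-d}\int_{\mathbb R^d}e^{-\frac t8|\xi|^4}\cos(\xi\cdot x)d\xi$, $t>0$. *)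

theory Defs
  imports "HOL-Analysis.Analysis"
begin

text \<open>Kernels on R^d, with d = CARD('n); convention K_t = 0 for t < 0.
  The xi-integral is the Lebesgue (Bochner) integral over lborel.\<close>

definition K_LKS :: "real \<Rightarrow> real ^ 'n \<Rightarrow> real" where
  "K_LKS t x = (if t < 0 then 0 else
     (1 / (2 * pi) ^ CARD('n)) *
     (\<integral> \<xi>. exp (- (t / 8) * (- 2 + (norm \<xi>)^2)^2) * cos (\<xi> \<bullet> x) \<partial>lborel))"

definition K_SFO :: "real \<Rightarrow> real ^ 'n \<Rightarrow> real" where
  "K_SFO t x = (if t < 0 then 0 else
     (1 / (2 * pi) ^ CARD('n)) *
     (\<integral> \<xi>. exp (- (t / 8) * (norm \<xi>)^4) * cos (\<xi> \<bullet> x) \<partial>lborel))"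

end

theory Submission
  imports Defs "HOL-Probability.Probability" "HOL-Real_Asymp.Real_Asymp"
begin

lemma integral_lborel_prod_basis:
  fixes f :: "'a::euclidean_space \<Rightarrow> real \<Rightarrow> complex"
  assumes int: "\<And>b. b \<in> Basis \<Longrightarrow> integrable lborel (f b)"
  shows "integrable (lborel::'a measure) (\<lambda>x. \<Prod>b\<in>Basis. f b (x \<bullet> b))"
    and "(\<integral>x. (\<Prod>b\<in>Basis. f b (x \<bullet> b)) \<partial>(lborel::'a measure)) = (\<Prod>b\<in>Basis. integral\<^sup>L lborel (f b))"
proof -
  interpret product_sigma_finite "\<lambda>_. lborel::real measure" by standard
  let ?T = "\<lambda>g::'a\<Rightarrow>real. \<Sum>b\<in>Basis. g b *\<^sub>R b"
  have meas[measurable]: "\<And>b. b \<in> Basis \<Longrightarrow> f b \<in> borel_measurable borel"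
  proof -
    fix b :: 'a assume "b \<in> Basis"
    from borel_measurable_integrable[OF int[OF this]] show "f b \<in> borel_measurable borel" by simp
  qed
  have T[measurable]: "?T \<in> (\<Pi>\<^sub>M b\<in>Basis. lborel) \<rightarrow>\<^sub>M borel" by measurable
  have eq: "\<And>g b. b \<in> Basis \<Longrightarrow> ?T g \<bullet> b = g b"
    by (simp add: inner_sum_left inner_Basis if_distrib cong: if_cong)
  have eq2: "\<And>g. (\<Prod>b\<in>Basis. f b (?T g \<bullet> b)) = (\<Prod>b\<in>Basis. f b (g b))"
    by (intro prod.cong) (auto simp: eq)
  have m2: "(\<lambda>x::'a. \<Prod>b\<in>Basis. f b (x \<bullet> b)) \<in> borel_measurable borel"
    by (intro borel_measurable_prod measurable_compose[OF _ meas]) auto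
  have pi: "integrable (\<Pi>\<^sub>M b\<in>Basis. lborel) (\<lambda>g. \<Prod>b\<in>Basis. f b (g b))"
    by (intro product_integrable_prod int) auto
  show I: "integrable (lborel::'a measure) (\<lambda>x. \<Prod>b\<in>Basis. f b (x \<bullet> b))"
    apply (subst lborel_eq)
    apply (subst integrable_distr_eq)
    using T m2 pi by (auto simp: eq2)
  show "(\<integral>x. (\<Prod>b\<in>Basis. f b (x \<bullet> b)) \<partial>(lborel::'a measure)) = (\<Prod>b\<in>Basis. integral\<^sup>L lborel (f b))"
    apply (subst lborel_eq)
    apply (subst integral_distr)
    using T m2 by (auto simp: eq2 intro!: product_integral_prod int)
qed

lemma gauss_char_1d:
  fixes \<sigma> z :: real assumes s: "\<sigma> > 0"
  shows "(\<integral>y. complex_of_real (exp (- y\<^sup>2 / (2 * \<sigma>\<^sup>2))) * iexp (z * y) \<partial>lborel)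
         = complex_of_real (\<sigma> * sqrt (2 * pi) * exp (- (\<sigma>\<^sup>2 * z\<^sup>2) / 2))"
proof -
  have "char std_normal_distribution (\<sigma> * z) = complex_of_real (exp (- ((\<sigma> * z)\<^sup>2) / 2))"
    by (simp add: char_std_normal_distribution)
  moreover have "char std_normal_distribution (\<sigma> * z)
      = (\<integral>u. std_normal_density u *\<^sub>R iexp (\<sigma> * z * u) \<partial>lborel)"
    unfolding char_def by (subst integral_density) auto
  moreover have "(\<integral>u. std_normal_density u *\<^sub>R iexp (\<sigma> * z * u) \<partial>lborel)
      = \<bar>1/\<sigma>\<bar> *\<^sub>R (\<integral>y. std_normal_density (0 + 1/\<sigma> * y) *\<^sub>R iexp (\<sigma> * z * (0 + 1/\<sigma> * y)) \<partial>lborel)"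
    by (rule lborel_integral_real_affine) (use s in auto)
  moreover have "\<And>y. std_normal_density (0 + 1/\<sigma> * y) *\<^sub>R iexp (\<sigma> * z * (0 + 1/\<sigma> * y))
      = (1 / sqrt (2*pi)) *\<^sub>R (complex_of_real (exp (- y\<^sup>2 / (2 * \<sigma>\<^sup>2))) * iexp (z * y))"
    using s by (simp add: std_normal_density_def power_divide field_simps scaleR_conv_of_real)
  ultimately have "(1/\<sigma>) *\<^sub>R ((1 / sqrt (2*pi)) *\<^sub>R (\<integral>y. complex_of_real (exp (- y\<^sup>2 / (2 * \<sigma>\<^sup>2))) * iexp (z * y) \<partial>lborel))
      = complex_of_real (exp (- ((\<sigma> * z)\<^sup>2) / 2))"
    using s by simp
  then show ?thesis
    using s by (simp add: scaleR_conv_of_real field_simps power_mult_distrib)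
qed

lemma re_iexp: "Re (iexp t) = cos t"
  by (simp add: Re_exp)

definition gw :: "real \<Rightarrow> 'a::euclidean_space \<Rightarrow> real" where
  "gw \<sigma> x = exp (- (norm x)\<^sup>2 / (2 * \<sigma>\<^sup>2))"

definition GF :: "real \<Rightarrow> 'a::euclidean_space \<Rightarrow> real" where
  "GF \<sigma> z = (\<Prod>b\<in>Basis. \<sigma> * sqrt (2 * pi) * exp (- (\<sigma>\<^sup>2 * (z \<bullet> b)\<^sup>2) / 2))"

lemma gauss_ft:
  fixes \<sigma> :: real and z :: "'a::euclidean_space" assumes s: "\<sigma> > 0"
  shows "integrable lborel (\<lambda>x::'a. gw \<sigma> x * cos (z \<bullet> x))"
    and "(\<integral>x. gw \<sigma> x * cos (z \<bullet> x) \<partial>lborel) = GF \<sigma> z"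
proof -
  define f where "f = (\<lambda>(b::'a) y. complex_of_real (exp (- y\<^sup>2 / (2 * \<sigma>\<^sup>2))) * iexp ((z \<bullet> b) * y))"
  have i1: "integrable lborel (f b)" for b
  proof -
    have "(\<integral>y. f b y \<partial>lborel) \<noteq> 0"
      unfolding f_def using gauss_char_1d[OF s, of "z \<bullet> b"] s by simp
    then show ?thesis using not_integrable_integral_eq by blast
  qed
  have heq: "(\<Prod>b\<in>Basis. f b (x \<bullet> b)) = complex_of_real (gw \<sigma> x) * iexp (z \<bullet> x)" for x
  proof -
    have n: "(norm x)\<^sup>2 = (\<Sum>b\<in>Basis. (x \<bullet> b)\<^sup>2)"
      unfolding power2_norm_eq_inner by (subst euclidean_inner) (simp add: power2_eq_square)
    have zi: "z \<bullet> x = (\<Sum>b\<in>Basis. (z \<bullet> b) * (x \<bullet> b))"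
      by (simp add: euclidean_inner[of z x])
    have "(\<Prod>b\<in>Basis. f b (x \<bullet> b)) = (\<Prod>b\<in>Basis. complex_of_real (exp (- (x \<bullet> b)\<^sup>2 / (2 * \<sigma>\<^sup>2)))) * (\<Prod>b\<in>Basis. iexp ((z \<bullet> b) * (x \<bullet> b)))"
      unfolding f_def by (simp add: prod.distrib)
    also have "(\<Prod>b\<in>Basis. complex_of_real (exp (- (x \<bullet> b)\<^sup>2 / (2 * \<sigma>\<^sup>2)))) = complex_of_real (gw \<sigma> x)"
      unfolding gw_def n by (simp add: sum_divide_distrib sum_negf[symmetric] exp_sum del: sum_negf)
    also have "(\<Prod>b\<in>Basis. iexp ((z \<bullet> b) * (x \<bullet> b))) = iexp (z \<bullet> x)"
      unfolding zi by (simp add: exp_sum[symmetric] sum_distrib_left)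
    finally show ?thesis .
  qed
  have I: "integrable lborel (\<lambda>x::'a. complex_of_real (gw \<sigma> x) * iexp (z \<bullet> x))"
    using integral_lborel_prod_basis(1)[of f, OF i1] by (simp add: heq)
  have V: "(\<integral>x. complex_of_real (gw \<sigma> x) * iexp (z \<bullet> x) \<partial>lborel) = complex_of_real (GF \<sigma> z)"
  proof -
    have "(\<integral>x. complex_of_real (gw \<sigma> x) * iexp (z \<bullet> x) \<partial>lborel) = (\<integral>x. (\<Prod>b\<in>Basis. f b (x \<bullet> b)) \<partial>lborel)"
      by (simp add: heq)
    also have "\<dots> = (\<Prod>b\<in>Basis. integral\<^sup>L lborel (f b))"
      by (rule integral_lborel_prod_basis(2)[OF i1])
    also have "\<dots> = (\<Prod>b\<in>Basis. complex_of_real (\<sigma> * sqrt (2 * pi) * exp (- (\<sigma>\<^sup>2 * (z \<bullet> b)\<^sup>2) / 2)))"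
      by (intro prod.cong refl) (unfold f_def, rule gauss_char_1d[OF s])
    also have "\<dots> = complex_of_real (GF \<sigma> z)"
      by (simp add: GF_def)
    finally show ?thesis .
  qed
  have re: "\<And>x. Re (complex_of_real (gw \<sigma> x) * iexp (z \<bullet> x)) = gw \<sigma> x * cos (z \<bullet> x)"
    by (simp add: Re_exp)
  show "integrable lborel (\<lambda>x::'a. gw \<sigma> x * cos (z \<bullet> x))"
    using integrable_Re[OF I] by (simp add: re_iexp)
  show "(\<integral>x. gw \<sigma> x * cos (z \<bullet> x) \<partial>lborel) = GF \<sigma> z"
    using integral_Re[OF I] V by (simp add: re_iexp)
qed

lemma GF_nonneg: "\<sigma> > 0 \<Longrightarrow> GF \<sigma> z \<ge> 0"
  unfolding GF_def by (intro prod_nonneg) auto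

lemma GF_minus: "GF \<sigma> (- z) = GF \<sigma> z"
  unfolding GF_def by simp

lemma GF_measurable[measurable]: "GF \<sigma> \<in> borel_measurable borel"
  unfolding GF_def by measurable

lemma nn_integral_normal_density: "s > 0 \<Longrightarrow> (\<integral>\<^sup>+x. ennreal (normal_density \<mu> s x) \<partial>lborel) = 1"
proof -
  assume "s > 0"
  then interpret prob_space "density lborel (normal_density \<mu> s)" by (rule prob_space_normal_density)
  have "emeasure (density lborel (normal_density \<mu> s)) UNIV = 1"
    using emeasure_space_1 by simp
  then show ?thesis by (simp add: emeasure_density)
qed

lemma gauss_1d_nn:
  assumes s: "\<sigma> > 0"
  shows "(\<integral>\<^sup>+y. ennreal (\<sigma> * sqrt (2 * pi) * exp (- (\<sigma>\<^sup>2 * y\<^sup>2) / 2)) \<partial>lborel) = ennreal (2 * pi)"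
proof -
  have eq: "\<sigma> * sqrt (2 * pi) * exp (- (\<sigma>\<^sup>2 * y\<^sup>2) / 2) = (2 * pi) * normal_density 0 (1/\<sigma>) y" for y
  proof -
    have q: "sqrt (2 * pi * (1 / \<sigma>)\<^sup>2) = sqrt (2 * pi) / \<sigma>"
      using s by (simp add: real_sqrt_mult power_divide real_sqrt_divide)
    have r: "2 * pi = sqrt (2 * pi) * sqrt (2 * pi)" by simp
    show ?thesis unfolding normal_density_def q using s
      by (subst (2) r) (simp add: field_simps power_divide)
  qed
  show ?thesis
    unfolding eq using s by (simp add: ennreal_mult nn_integral_cmult nn_integral_normal_density)
qed

lemma GF_nn_integral:
  assumes s: "\<sigma> > 0"
  shows "(\<integral>\<^sup>+z. ennreal (GF \<sigma> (z::'a::euclidean_space)) \<partial>lborel) = ennreal ((2 * pi) ^ DIM('a))"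
proof -
  have "(\<integral>\<^sup>+z. ennreal (GF \<sigma> (z::'a)) \<partial>lborel)
      = (\<integral>\<^sup>+z. (\<Prod>b\<in>(Basis::'a set). (\<lambda>b y. ennreal (\<sigma> * sqrt (2 * pi) * exp (- (\<sigma>\<^sup>2 * y\<^sup>2) / 2))) b (z \<bullet> b)) \<partial>lborel)"
    unfolding GF_def using s by (simp add: prod_ennreal)
  also have "\<dots> = (\<Prod>b\<in>(Basis::'a set). \<integral>\<^sup>+y. ennreal (\<sigma> * sqrt (2 * pi) * exp (- (\<sigma>\<^sup>2 * y\<^sup>2) / 2)) \<partial>lborel)"
    by (rule nn_integral_lborel_prod) auto
  also have "\<dots> = (\<Prod>b\<in>(Basis::'a set). ennreal (2 * pi))"
    by (simp only: gauss_1d_nn[OF s])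
  also have "\<dots> = ennreal ((2 * pi) ^ DIM('a))"
    by (simp add: ennreal_power)
  finally show ?thesis .
qed

lemma fst_lborel_meas[measurable]: "fst \<in> (lborel::('a::euclidean_space\<times>'b::euclidean_space) measure) \<rightarrow>\<^sub>M (borel::'a measure)"
  using measurable_fst[of "lborel::'a measure" "lborel::'b measure"] by (simp add: lborel_prod)

lemma snd_lborel_meas[measurable]: "snd \<in> (lborel::('a::euclidean_space\<times>'b::euclidean_space) measure) \<rightarrow>\<^sub>M (borel::'b measure)"
  using measurable_snd[of "lborel::'a measure" "lborel::'b measure"] by (simp add: lborel_prod)

lemma pair_prod_integrable:
  fixes a b :: "'a::euclidean_space \<Rightarrow> real"
  assumes ia: "integrable lborel a" and ib: "integrable lborel b"
  shows "integrable (lborel::('a\<times>'a) measure) (\<lambda>p. a (fst p) * b (snd p))"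
    and "(\<integral>p. a (fst p) * b (snd p) \<partial>(lborel::('a\<times>'a) measure)) = (\<integral>x. a x \<partial>lborel) * (\<integral>x. b x \<partial>lborel)"
proof -
  have am[measurable]: "a \<in> borel_measurable borel" using borel_measurable_integrable[OF ia] by simp
  have bm[measurable]: "b \<in> borel_measurable borel" using borel_measurable_integrable[OF ib] by simp
  have I: "integrable (lborel \<Otimes>\<^sub>M lborel) (\<lambda>p::'a\<times>'a. a (fst p) * b (snd p))"
  proof (rule integrableI_bounded)
    show "(\<lambda>p::'a\<times>'a. a (fst p) * b (snd p)) \<in> borel_measurable (lborel \<Otimes>\<^sub>M lborel)" by measurable
    have "(\<integral>\<^sup>+ p. ennreal (norm (a (fst p) * b (snd p))) \<partial>(lborel \<Otimes>\<^sub>M lborel))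
        = (\<integral>\<^sup>+ x. \<integral>\<^sup>+ y. ennreal (norm (a x)) * ennreal (norm (b y)) \<partial>lborel \<partial>lborel)"
      by (subst lborel.nn_integral_fst[symmetric]) (auto simp: abs_mult ennreal_mult)
    also have "\<dots> = (\<integral>\<^sup>+ x. ennreal (norm (a x)) \<partial>lborel) * (\<integral>\<^sup>+ y. ennreal (norm (b y)) \<partial>lborel)"
      by (simp add: nn_integral_cmult nn_integral_multc)
    also have "\<dots> < \<infinity>"
      using ia ib unfolding integrable_iff_bounded by (simp add: ennreal_mult_less_top)
    finally show "(\<integral>\<^sup>+ p. ennreal (norm (a (fst p) * b (snd p))) \<partial>(lborel \<Otimes>\<^sub>M lborel)) < \<infinity>" .
  qed
  then show "integrable (lborel::('a\<times>'a) measure) (\<lambda>p. a (fst p) * b (snd p))"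
    by (simp add: lborel_prod)
  have "(\<integral>p. a (fst p) * b (snd p) \<partial>(lborel \<Otimes>\<^sub>M lborel)) = (\<integral>x. \<integral>y. a x * b y \<partial>lborel \<partial>lborel)"
    using lborel_pair.integral_fst'[OF I] by simp
  also have "\<dots> = (\<integral>x. a x \<partial>lborel) * (\<integral>x. b x \<partial>lborel)"
    by simp
  finally show "(\<integral>p. a (fst p) * b (snd p) \<partial>(lborel::('a\<times>'a) measure)) = (\<integral>x. a x \<partial>lborel) * (\<integral>x. b x \<partial>lborel)"
    by (simp add: lborel_prod)
qed

lemma nn_shift_lborel:
  fixes g :: "'a::euclidean_space \<Rightarrow> ennreal"
  assumes [measurable]: "g \<in> borel_measurable borel"
  shows "(\<integral>\<^sup>+y. g (c + y) \<partial>lborel) = (\<integral>\<^sup>+y. g y \<partial>lborel)"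
proof -
  have "(\<integral>\<^sup>+y. g y \<partial>lborel) = (\<integral>\<^sup>+y. g y \<partial>distr lborel borel ((+) c))"
    by (simp add: lborel_distr_plus)
  also have "\<dots> = (\<integral>\<^sup>+y. g (c + y) \<partial>lborel)"
    by (subst nn_integral_distr) auto
  finally show ?thesis ..
qed

lemma GF_shift_fst:
  fixes u :: "'a::euclidean_space \<Rightarrow> real"
  assumes [measurable]: "u \<in> borel_measurable borel" and s: "\<sigma> > 0" and u0: "\<And>x. u x \<ge> 0"
  shows "(\<integral>\<^sup>+p. ennreal (u (fst p) * GF \<sigma> (k *\<^sub>R fst p + snd p)) \<partial>(lborel::('a\<times>'a) measure))
       = (\<integral>\<^sup>+x. ennreal (u x) \<partial>lborel) * ennreal ((2 * pi) ^ DIM('a))"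
proof -
  have "(\<integral>\<^sup>+p. ennreal (u (fst p) * GF \<sigma> (k *\<^sub>R fst p + snd p)) \<partial>(lborel::('a\<times>'a) measure))
      = (\<integral>\<^sup>+x. \<integral>\<^sup>+y. ennreal (u x) * ennreal (GF \<sigma> (k *\<^sub>R x + y)) \<partial>lborel \<partial>lborel)"
    by (subst lborel_prod[symmetric], subst lborel.nn_integral_fst[symmetric])
       (auto simp: ennreal_mult u0 GF_nonneg[OF s])
  also have "\<dots> = (\<integral>\<^sup>+x. ennreal (u x) * (\<integral>\<^sup>+y. ennreal (GF \<sigma> (k *\<^sub>R x + y)) \<partial>lborel) \<partial>lborel)"
    by (simp add: nn_integral_cmult)
  also have "\<dots> = (\<integral>\<^sup>+x. ennreal (u x) * ennreal ((2 * pi) ^ DIM('a)) \<partial>lborel)"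
    by (simp add: nn_shift_lborel[of "\<lambda>z. ennreal (GF \<sigma> z)"] GF_nn_integral[OF s])
  also have "\<dots> = (\<integral>\<^sup>+x. ennreal (u x) \<partial>lborel) * ennreal ((2 * pi) ^ DIM('a))"
    by (simp add: nn_integral_multc)
  finally show ?thesis .
qed

lemma GF_shift_snd:
  fixes u :: "'a::euclidean_space \<Rightarrow> real"
  assumes [measurable]: "u \<in> borel_measurable borel" and s: "\<sigma> > 0" and u0: "\<And>x. u x \<ge> 0"
  shows "(\<integral>\<^sup>+p. ennreal (u (snd p) * GF \<sigma> (k *\<^sub>R snd p + fst p)) \<partial>(lborel::('a\<times>'a) measure))
       = (\<integral>\<^sup>+x. ennreal (u x) \<partial>lborel) * ennreal ((2 * pi) ^ DIM('a))"
proof -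
  have "(\<integral>\<^sup>+p. ennreal (u (snd p) * GF \<sigma> (k *\<^sub>R snd p + fst p)) \<partial>(lborel::('a\<times>'a) measure))
      = (\<integral>\<^sup>+y. \<integral>\<^sup>+x. ennreal (u y) * ennreal (GF \<sigma> (k *\<^sub>R y + x)) \<partial>lborel \<partial>lborel)"
    by (subst lborel_prod[symmetric], subst lborel_pair.nn_integral_snd[symmetric])
       (auto simp: ennreal_mult u0 GF_nonneg[OF s])
  also have "\<dots> = (\<integral>\<^sup>+y. ennreal (u y) * (\<integral>\<^sup>+x. ennreal (GF \<sigma> (k *\<^sub>R y + x)) \<partial>lborel) \<partial>lborel)"
    by (simp add: nn_integral_cmult)
  also have "\<dots> = (\<integral>\<^sup>+x. ennreal (u x) * ennreal ((2 * pi) ^ DIM('a)) \<partial>lborel)"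
    by (simp add: nn_shift_lborel[of "\<lambda>z. ennreal (GF \<sigma> z)"] GF_nn_integral[OF s])
  also have "\<dots> = (\<integral>\<^sup>+x. ennreal (u x) \<partial>lborel) * ennreal ((2 * pi) ^ DIM('a))"
    by (simp add: nn_integral_multc)
  finally show ?thesis .
qed

lemma fcos_integrable:
  fixes f :: "'a::euclidean_space \<Rightarrow> real"
  assumes fi: "integrable lborel f"
  shows "integrable lborel (\<lambda>\<xi>. f \<xi> * cos (\<xi> \<bullet> x))"
proof -
  have [measurable]: "f \<in> borel_measurable borel" using borel_measurable_integrable[OF fi] by simp
  show ?thesis
    by (rule Bochner_Integration.integrable_bound[OF integrable_norm[OF fi]])
       (auto simp: abs_mult intro!: mult_left_le)
qed

lemma four_sum: "(X::ennreal) + X + (X + X) = 4 * X"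
proof -
  have "X + X + (X + X) = 2 * X + 2 * X" by (simp add: mult_2)
  also have "\<dots> = (2 + 2) * X" by (rule distrib_right[symmetric])
  finally show ?thesis by simp
qed

lemma plancherel_gauss:
  fixes f :: "'a::euclidean_space \<Rightarrow> real"
  assumes fm[measurable]: "f \<in> borel_measurable borel" and fi: "integrable lborel f"
    and fb: "\<And>x. \<bar>f x\<bar> \<le> B" and s: "\<sigma> > 0"
  shows "(\<integral>\<^sup>+x. ennreal (gw \<sigma> x * (\<integral>\<xi>. f \<xi> * cos (\<xi> \<bullet> x) \<partial>lborel)\<^sup>2) \<partial>lborel)
     \<le> ennreal ((2*pi)^DIM('a) * (\<integral>\<xi>. (f \<xi>)\<^sup>2 \<partial>lborel))"
proof -
  define F where "F x = (\<integral>\<xi>. f \<xi> * cos (\<xi> \<bullet> x) \<partial>lborel)" for x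
  define L where "L = (\<integral>\<xi>. \<bar>f \<xi>\<bar> \<partial>lborel)"
  have Fm[measurable]: "F \<in> borel_measurable borel"
    unfolding F_def by measurable
  have FL: "\<bar>F x\<bar> \<le> L" for x
  proof -
    have "\<bar>F x\<bar> \<le> (\<integral>\<xi>. \<bar>f \<xi> * cos (\<xi> \<bullet> x)\<bar> \<partial>lborel)"
      unfolding F_def by (rule integral_abs_bound)
    also have "\<dots> \<le> L"
      unfolding L_def using integrable_abs[OF fcos_integrable[OF fi, of x]] integrable_abs[OF fi]
      by (intro integral_mono) (auto simp: abs_mult intro!: mult_left_le)
    finally show ?thesis .
  qed
  have gwm[measurable]: "gw \<sigma> \<in> borel_measurable (borel::'a measure)"
    unfolding gw_def by measurable
  have gwi: "integrable lborel (gw \<sigma> :: 'a \<Rightarrow> real)"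
    using gauss_ft(1)[OF s, of 0] by simp
  have gw0: "0 \<le> gw \<sigma> x" for x unfolding gw_def by simp
  have fb2: "(f x)\<^sup>2 \<le> \<bar>B\<bar> * \<bar>f x\<bar>" for x
  proof -
    have "(f x)\<^sup>2 = \<bar>f x\<bar> * \<bar>f x\<bar>" by (simp add: power2_eq_square)
    also have "\<dots> \<le> \<bar>B\<bar> * \<bar>f x\<bar>" using fb[of x] by (intro mult_right_mono) auto
    finally show ?thesis .
  qed
  have f2i: "integrable lborel (\<lambda>\<xi>. (f \<xi>)\<^sup>2)"
    by (rule Bochner_Integration.integrable_bound[of _ "\<lambda>x. \<bar>B\<bar> * \<bar>f x\<bar>"])
       (use fi fb2 in auto)
  define H where "H x p = gw \<sigma> x * (f (fst p) * cos (fst p \<bullet> x)) * (f (snd p) * cos (snd p \<bullet> x))"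
    for x :: 'a and p :: "'a \<times> 'a"
  have Hm': "case_prod H \<in> borel_measurable (lborel \<Otimes>\<^sub>M (lborel \<Otimes>\<^sub>M lborel))"
    unfolding H_def by measurable
  then have Hm[measurable]: "case_prod H \<in> borel_measurable (lborel \<Otimes>\<^sub>M lborel)"
    by (simp add: lborel_prod)
  have Hb: "\<bar>H x p\<bar> \<le> gw \<sigma> x * (\<bar>f (fst p)\<bar> * \<bar>f (snd p)\<bar>)" for x p
  proof -
    have "\<bar>H x p\<bar> = gw \<sigma> x * ((\<bar>f (fst p)\<bar> * \<bar>cos (fst p \<bullet> x)\<bar>) * (\<bar>f (snd p)\<bar> * \<bar>cos (snd p \<bullet> x)\<bar>))"
      by (simp add: H_def abs_mult gw0)
    also have "\<dots> \<le> gw \<sigma> x * (\<bar>f (fst p)\<bar> * \<bar>f (snd p)\<bar>)"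
      by (intro mult_left_mono mult_mono mult_right_le_one_le) (auto simp: gw0)
    finally show ?thesis .
  qed
  have HI: "integrable ((lborel::'a measure) \<Otimes>\<^sub>M (lborel::('a\<times>'a) measure)) (case_prod H)"
  proof (rule integrableI_bounded)
    show "case_prod H \<in> borel_measurable (lborel \<Otimes>\<^sub>M lborel)" by (rule Hm)
    have "(\<integral>\<^sup>+ q. ennreal (norm (case_prod H q)) \<partial>((lborel::'a measure) \<Otimes>\<^sub>M (lborel::('a\<times>'a) measure)))
       \<le> (\<integral>\<^sup>+ q. ennreal (gw \<sigma> (fst q) * (\<bar>f (fst (snd q))\<bar> * \<bar>f (snd (snd q))\<bar>)) \<partial>((lborel::'a measure) \<Otimes>\<^sub>M (lborel::('a\<times>'a) measure)))"
      by (intro nn_integral_mono) (auto intro!: ennreal_leI simp: split_beta Hb[of _ "(_, _)", simplified])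
    also have "\<dots> = (\<integral>\<^sup>+ x. \<integral>\<^sup>+ p. ennreal (gw \<sigma> x * (\<bar>f (fst p)\<bar> * \<bar>f (snd p)\<bar>)) \<partial>(lborel::('a\<times>'a) measure) \<partial>(lborel::'a measure))"
    proof -
      have m: "(\<lambda>q::'a\<times>('a\<times>'a). ennreal (gw \<sigma> (fst q) * (\<bar>f (fst (snd q))\<bar> * \<bar>f (snd (snd q))\<bar>)))
          \<in> borel_measurable (lborel \<Otimes>\<^sub>M (lborel \<Otimes>\<^sub>M lborel))" by measurable
      then have m': "(\<lambda>q::'a\<times>('a\<times>'a). ennreal (gw \<sigma> (fst q) * (\<bar>f (fst (snd q))\<bar> * \<bar>f (snd (snd q))\<bar>)))
          \<in> borel_measurable ((lborel::'a measure) \<Otimes>\<^sub>M (lborel::('a\<times>'a) measure))" by (simp add: lborel_prod)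
      show ?thesis using lborel.nn_integral_fst[OF m'] by simp
    qed
    also have "\<dots> = (\<integral>\<^sup>+ x. \<integral>\<^sup>+ p. ennreal (gw \<sigma> x) * ennreal (\<bar>f (fst p)\<bar> * \<bar>f (snd p)\<bar>) \<partial>(lborel::('a\<times>'a) measure) \<partial>(lborel::'a measure))"
      by (simp add: ennreal_mult gw0)
    also have "\<dots> = (\<integral>\<^sup>+ x. ennreal (gw \<sigma> x) \<partial>(lborel::'a measure)) * (\<integral>\<^sup>+ p. ennreal (\<bar>f (fst p)\<bar> * \<bar>f (snd p)\<bar>) \<partial>(lborel::('a\<times>'a) measure))"
      by (simp add: nn_integral_cmult nn_integral_multc)
    also have "\<dots> < \<infinity>"
    proof -
      have "integrable (lborel::('a\<times>'a) measure) (\<lambda>p. \<bar>f (fst p)\<bar> * \<bar>f (snd p)\<bar>)"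
        using pair_prod_integrable(1)[of "\<lambda>x. \<bar>f x\<bar>" "\<lambda>x. \<bar>f x\<bar>"] fi by simp
      then have a: "(\<integral>\<^sup>+ p. ennreal (\<bar>f (fst p)\<bar> * \<bar>f (snd p)\<bar>) \<partial>(lborel::('a\<times>'a) measure)) < \<infinity>"
        unfolding integrable_iff_bounded by simp
      have b: "(\<integral>\<^sup>+ x. ennreal (gw \<sigma> x) \<partial>(lborel::'a measure)) < \<infinity>"
        using gwi unfolding integrable_iff_bounded by (simp add: gw0)
      show ?thesis using a b by (simp add: ennreal_mult_less_top)
    qed
    finally show "(\<integral>\<^sup>+ q. ennreal (norm (case_prod H q)) \<partial>((lborel::'a measure) \<Otimes>\<^sub>M (lborel::('a\<times>'a) measure))) < \<infinity>" .
  qed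
  have inner: "gw \<sigma> x * (F x)\<^sup>2 = (\<integral>p. H x p \<partial>lborel)" for x
  proof -
    have "(F x)\<^sup>2 = (\<integral>p. (f (fst p) * cos (fst p \<bullet> x)) * (f (snd p) * cos (snd p \<bullet> x)) \<partial>(lborel::('a\<times>'a) measure))"
      unfolding F_def power2_eq_square
      by (rule pair_prod_integrable(2)[symmetric]; rule fcos_integrable[OF fi])
    then show ?thesis
      unfolding H_def by (simp add: mult.assoc)
  qed
  define J where "J p = f (fst p) * f (snd p) * (GF \<sigma> (fst p - snd p) + GF \<sigma> (fst p + snd p)) / 2"
    for p :: "'a \<times> 'a"
  have innerx: "(\<integral>x. H x p \<partial>lborel) = J p" for p
  proof -
    obtain a b where p: "p = (a, b)" by (cases p)
    have hx: "\<And>x. H x p = (f a * f b / 2) * (gw \<sigma> x * cos ((a - b) \<bullet> x) + gw \<sigma> x * cos ((a + b) \<bullet> x))"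
      unfolding H_def p by (simp add: cos_times_cos inner_diff_left inner_add_left algebra_simps)
    have "(\<integral>x. H x p \<partial>lborel) = (\<integral>x. (f a * f b / 2) * (gw \<sigma> x * cos ((a - b) \<bullet> x) + gw \<sigma> x * cos ((a + b) \<bullet> x)) \<partial>lborel)"
      by (simp only: hx)
    also have "\<dots> = (f a * f b / 2) * ((\<integral>x. gw \<sigma> x * cos ((a - b) \<bullet> x) \<partial>lborel) + (\<integral>x. gw \<sigma> x * cos ((a + b) \<bullet> x) \<partial>lborel))"
      by (simp add: Bochner_Integration.integral_add[OF gauss_ft(1)[OF s] gauss_ft(1)[OF s]])
    finally have "(\<integral>x. H x p \<partial>lborel) = (f a * f b / 2) * ((\<integral>x. gw \<sigma> x * cos ((a - b) \<bullet> x) \<partial>lborel) + (\<integral>x. gw \<sigma> x * cos ((a + b) \<bullet> x) \<partial>lborel))" .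
    moreover have "(\<integral>x. gw \<sigma> x * cos ((a - b) \<bullet> x) \<partial>lborel) = GF \<sigma> (a - b)" by (rule gauss_ft(2)[OF s])
    moreover have "(\<integral>x. gw \<sigma> x * cos ((a + b) \<bullet> x) \<partial>lborel) = GF \<sigma> (a + b)" by (rule gauss_ft(2)[OF s])
    ultimately show ?thesis unfolding J_def p by simp
  qed
  have Jint: "integrable lborel J"
    using lborel_pair.integrable_snd[OF HI] by (simp add: innerx)
  have eq1: "(\<integral>x. gw \<sigma> x * (F x)\<^sup>2 \<partial>lborel) = (\<integral>p. J p \<partial>lborel)"
    using lborel_pair.Fubini_integral[OF HI] by (simp add: inner innerx)
  have FL2: "(F x)\<^sup>2 \<le> L\<^sup>2" for x
    using FL[of x] by (metis abs_ge_zero power2_abs power_mono)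
  have nb: "\<bar>gw \<sigma> x * (F x)\<^sup>2\<bar> \<le> \<bar>gw \<sigma> x * L\<^sup>2\<bar>" for x
    using FL2[of x] gw0[of x] by (simp add: abs_mult mult_left_mono)
  have lhs: "(\<integral>\<^sup>+x. ennreal (gw \<sigma> x * (F x)\<^sup>2) \<partial>lborel) = ennreal (\<integral>x. gw \<sigma> x * (F x)\<^sup>2 \<partial>lborel)"
  proof (rule nn_integral_eq_integral)
    show "integrable lborel (\<lambda>x. gw \<sigma> x * (F x)\<^sup>2)"
      by (rule Bochner_Integration.integrable_bound[of _ "\<lambda>x. gw \<sigma> x * L\<^sup>2"])
         (use gwi in \<open>auto intro!: AE_I2 simp: nb\<close>)
  qed (auto simp: gw0)
  define R where "R p = ((f (fst p))\<^sup>2 + (f (snd p))\<^sup>2) / 4 * (GF \<sigma> (fst p - snd p) + GF \<sigma> (fst p + snd p))"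
    for p :: "'a \<times> 'a"
  have JR: "\<bar>J p\<bar> \<le> R p" for p
  proof -
    have g: "0 \<le> GF \<sigma> (fst p - snd p) + GF \<sigma> (fst p + snd p)" by (intro add_nonneg_nonneg GF_nonneg[OF s])
    have "0 \<le> (\<bar>f (fst p)\<bar> - \<bar>f (snd p)\<bar>)\<^sup>2" by simp
    then have ab: "\<bar>f (fst p) * f (snd p)\<bar> \<le> ((f (fst p))\<^sup>2 + (f (snd p))\<^sup>2) / 2"
      by (simp add: power2_eq_square algebra_simps abs_mult)
    have "\<bar>J p\<bar> = \<bar>f (fst p) * f (snd p)\<bar> * (GF \<sigma> (fst p - snd p) + GF \<sigma> (fst p + snd p)) / 2"
      unfolding J_def using g by (simp add: abs_mult abs_divide)
    also have "\<dots> \<le> ((f (fst p))\<^sup>2 + (f (snd p))\<^sup>2) / 2 * (GF \<sigma> (fst p - snd p) + GF \<sigma> (fst p + snd p)) / 2"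
      by (intro divide_right_mono mult_right_mono ab g) simp
    also have "\<dots> = R p" unfolding R_def by simp
    finally show ?thesis .
  qed
  have "ennreal (\<integral>p. J p \<partial>lborel) \<le> ennreal (norm (\<integral>p. J p \<partial>(lborel::('a\<times>'a) measure)))"
    by (intro ennreal_leI) simp
  also have "\<dots> \<le> (\<integral>\<^sup>+p. ennreal (norm (J p)) \<partial>lborel)"
    by (rule integral_norm_bound_ennreal[OF Jint])
  also have "\<dots> \<le> (\<integral>\<^sup>+p. ennreal (R p) \<partial>lborel)"
    by (intro nn_integral_mono ennreal_leI) (simp add: JR)
  also have "(\<integral>\<^sup>+p. ennreal (R p) \<partial>lborel) = ennreal ((2*pi)^DIM('a) * (\<integral>\<xi>. (f \<xi>)\<^sup>2 \<partial>lborel))"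
  proof -
    define u where "u x = (f x)\<^sup>2 / 4" for x
    have um[measurable]: "u \<in> borel_measurable borel" unfolding u_def by measurable
    have u0: "\<And>x. u x \<ge> 0" unfolding u_def by simp
    have Rs: "ennreal (R p) = ennreal (u (fst p) * GF \<sigma> ((-1) *\<^sub>R fst p + snd p)) + ennreal (u (fst p) * GF \<sigma> (1 *\<^sub>R fst p + snd p))
         + (ennreal (u (snd p) * GF \<sigma> ((-1) *\<^sub>R snd p + fst p)) + ennreal (u (snd p) * GF \<sigma> (1 *\<^sub>R snd p + fst p)))" for p
    proof -
      have a: "GF \<sigma> ((-1) *\<^sub>R fst p + snd p) = GF \<sigma> (fst p - snd p)"
        using GF_minus[of \<sigma> "fst p - snd p"] by simp
      have b: "GF \<sigma> ((-1) *\<^sub>R snd p + fst p) = GF \<sigma> (fst p - snd p)" by (simp add: algebra_simps)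
      have c: "GF \<sigma> (1 *\<^sub>R snd p + fst p) = GF \<sigma> (fst p + snd p)" by (simp add: algebra_simps)
      define t1 where "t1 = u (fst p) * GF \<sigma> ((-1) *\<^sub>R fst p + snd p)"
      define t2 where "t2 = u (fst p) * GF \<sigma> (1 *\<^sub>R fst p + snd p)"
      define t3 where "t3 = u (snd p) * GF \<sigma> ((-1) *\<^sub>R snd p + fst p)"
      define t4 where "t4 = u (snd p) * GF \<sigma> (1 *\<^sub>R snd p + fst p)"
      have t: "R p = t1 + t2 + (t3 + t4)"
        unfolding t1_def t2_def t3_def t4_def a b c R_def u_def by (simp add: algebra_simps add_divide_distrib)
      have n1: "0 \<le> t1" "0 \<le> t2" "0 \<le> t3" "0 \<le> t4"
        unfolding t1_def t2_def t3_def t4_def by (simp_all add: u0 GF_nonneg[OF s])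
      show ?thesis
        unfolding t1_def[symmetric] t2_def[symmetric] t3_def[symmetric] t4_def[symmetric] t
        using n1 by (simp add: ennreal_plus add_nonneg_nonneg del: ennreal_plus[symmetric])
    qed
    have "(\<integral>\<^sup>+p. ennreal (R p) \<partial>lborel)
        = (\<integral>\<^sup>+p. ennreal (u (fst p) * GF \<sigma> ((-1) *\<^sub>R fst p + snd p)) \<partial>(lborel::('a\<times>'a) measure))
        + (\<integral>\<^sup>+p. ennreal (u (fst p) * GF \<sigma> (1 *\<^sub>R fst p + snd p)) \<partial>(lborel::('a\<times>'a) measure))
        + ((\<integral>\<^sup>+p. ennreal (u (snd p) * GF \<sigma> ((-1) *\<^sub>R snd p + fst p)) \<partial>(lborel::('a\<times>'a) measure))
        + (\<integral>\<^sup>+p. ennreal (u (snd p) * GF \<sigma> (1 *\<^sub>R snd p + fst p)) \<partial>(lborel::('a\<times>'a) measure)))"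
      unfolding Rs by (simp add: nn_integral_add)
    also have "\<dots> = 4 * ((\<integral>\<^sup>+x. ennreal (u x) \<partial>lborel) * ennreal ((2 * pi) ^ DIM('a)))"
      unfolding GF_shift_fst[OF um s u0] GF_shift_snd[OF um s u0] by (rule four_sum)
    also have "(\<integral>\<^sup>+x. ennreal (u x) \<partial>lborel) = ennreal (\<integral>x. u x \<partial>lborel)"
      by (rule nn_integral_eq_integral) (use f2i u0 in \<open>auto simp: u_def\<close>)
    also have "(\<integral>x. u x \<partial>lborel) = (\<integral>\<xi>. (f \<xi>)\<^sup>2 \<partial>lborel) / 4"
      unfolding u_def by simp
    finally show ?thesis
      by (simp add: ennreal_mult[symmetric] ennreal_numeral[symmetric] integral_nonneg_AE del: ennreal_numeral)
  qed
  finally show ?thesis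
    using lhs eq1 unfolding F_def by simp
qed

lemma gw_mono: "0 < s \<Longrightarrow> s \<le> t \<Longrightarrow> gw s x \<le> gw t x"
  unfolding gw_def
proof (subst exp_le_cancel_iff)
  assume s: "0 < s" "s \<le> t"
  have "2 * s\<^sup>2 \<le> 2 * t\<^sup>2" using s by (simp add: power_mono)
  then have "(norm x)\<^sup>2 / (2 * t\<^sup>2) \<le> (norm x)\<^sup>2 / (2 * s\<^sup>2)"
    using s by (intro divide_left_mono) auto
  then show "- (norm x)\<^sup>2 / (2 * s\<^sup>2) \<le> - (norm x)\<^sup>2 / (2 * t\<^sup>2)" by simp
qed

lemma gw_lim: "(\<lambda>n. gw (real (Suc n)) x) \<longlonglongrightarrow> 1"
proof -
  have "(\<lambda>n. - (norm x)\<^sup>2 / (2 * (real (Suc n))\<^sup>2)) \<longlonglongrightarrow> 0"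
    by real_asymp
  then have "(\<lambda>n. exp (- (norm x)\<^sup>2 / (2 * (real (Suc n))\<^sup>2))) \<longlonglongrightarrow> exp 0"
    by (intro tendsto_intros)
  then show ?thesis unfolding gw_def by simp
qed

lemma plancherel_le:
  fixes f :: "'a::euclidean_space \<Rightarrow> real"
  assumes fm[measurable]: "f \<in> borel_measurable borel" and fi: "integrable lborel f"
    and fb: "\<And>x. \<bar>f x\<bar> \<le> B"
  shows "(\<integral>\<^sup>+x. ennreal ((\<integral>\<xi>. f \<xi> * cos (\<xi> \<bullet> x) \<partial>lborel)\<^sup>2) \<partial>lborel)
     \<le> ennreal ((2*pi)^DIM('a) * (\<integral>\<xi>. (f \<xi>)\<^sup>2 \<partial>lborel))"
proof -
  define F where "F x = (\<integral>\<xi>. f \<xi> * cos (\<xi> \<bullet> x) \<partial>lborel)" for x :: 'a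
  have Fm[measurable]: "F \<in> borel_measurable borel"
    unfolding F_def by measurable
  define u where "u n x = ennreal (gw (real (Suc n)) x * (F x)\<^sup>2)" for n x
  have um[measurable]: "\<And>n. u n \<in> borel_measurable lborel"
    unfolding u_def gw_def by measurable
  have inc: "incseq u"
    unfolding incseq_def le_fun_def u_def
    by (auto intro!: ennreal_leI mult_right_mono gw_mono)
  have sup: "(SUP n. u n x) = ennreal ((F x)\<^sup>2)" for x
  proof -
    have "(\<lambda>n. u n x) \<longlonglongrightarrow> (SUP n. u n x)"
      by (rule LIMSEQ_SUP) (use inc in \<open>auto simp: incseq_def le_fun_def\<close>)
    moreover have "(\<lambda>n. u n x) \<longlonglongrightarrow> ennreal ((F x)\<^sup>2)"
      unfolding u_def using gw_lim[of x]
      by (intro tendsto_ennrealI) (auto intro: tendsto_eq_intros)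
    ultimately show ?thesis by (rule LIMSEQ_unique)
  qed
  have "(\<integral>\<^sup>+x. ennreal ((F x)\<^sup>2) \<partial>lborel) = (\<integral>\<^sup>+x. (SUP n. u n x) \<partial>lborel)"
    by (simp add: sup)
  also have "\<dots> = (SUP n. \<integral>\<^sup>+x. u n x \<partial>lborel)"
    by (rule nn_integral_monotone_convergence_SUP[OF inc um])
  also have "\<dots> \<le> ennreal ((2*pi)^DIM('a) * (\<integral>\<xi>. (f \<xi>)\<^sup>2 \<partial>lborel))"
    unfolding u_def F_def
    by (intro SUP_least plancherel_gauss[OF fm fi fb]) simp
  finally show ?thesis unfolding F_def .
qed

definition kp :: "real \<Rightarrow> real \<Rightarrow> real" where
  "kp p y = (if \<bar>y\<bar> \<le> 1 then 1 else \<bar>y\<bar> powr (- p))"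

lemma kp_nonneg: "kp p y \<ge> 0" unfolding kp_def by simp

lemma kp_meas[measurable]: "kp p \<in> borel_measurable borel"
  unfolding kp_def by measurable

lemma kp_finite:
  assumes p: "p > 1"
  shows "(\<integral>\<^sup>+ y. ennreal (kp p y) \<partial>lborel) < \<infinity>"
proof -
  define g where "g y = indicator {1..} y * y powr (- p)" for y :: real
  define h1 where "h1 y = (indicator {-1..1} y :: real)" for y :: real
  have h1m[measurable]: "h1 \<in> borel_measurable borel" unfolding h1_def by measurable
  have h10: "h1 y \<ge> 0" for y unfolding h1_def by simp
  have gm[measurable]: "g \<in> borel_measurable borel" unfolding g_def by measurable
  have g0: "g y \<ge> 0" for y unfolding g_def by (simp add: indicator_def)
  have gI: "(\<integral>\<^sup>+ y. ennreal (g y) \<partial>lborel) = ennreal (1 / (p - 1))"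
  proof -
    have "((\<lambda>x. x powr (- p)) has_integral - (1 powr (- p + 1)) / (- p + 1)) {1..}"
      by (rule has_integral_powr_to_inf) (use p in auto)
    then have "(\<integral>\<^sup>+ x. ennreal (indicat_real {1..} x * x powr (- p)) \<partial>lborel) = ennreal (- (1 powr (- p + 1)) / (- p + 1))"
      by (intro nn_integral_has_integral_lebesgue) auto
    then show ?thesis unfolding g_def using p by (simp add: field_simps)
  qed
  have gI2: "(\<integral>\<^sup>+ y. ennreal (g (- y)) \<partial>lborel) = ennreal (1 / (p - 1))"
  proof -
    have "(\<integral>\<^sup>+ y. ennreal (g y) \<partial>lborel) = ennreal \<bar>-1\<bar> * (\<integral>\<^sup>+ y. ennreal (g (0 + (-1) * y)) \<partial>lborel)"
      by (rule nn_integral_real_affine) auto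
    then show ?thesis using gI by simp
  qed
  have bd: "ennreal (kp p y) \<le> ennreal (h1 y) + ennreal (g y) + ennreal (g (- y))" for y
  proof -
    have "kp p y \<le> h1 y + g y + g (- y)"
      unfolding kp_def g_def h1_def using g0[of y] g0[of "-y"]
      by (auto simp: indicator_def abs_if)
    then show ?thesis using g0[of y] g0[of "-y"] h10[of y]
      by (simp add: ennreal_plus[symmetric] del: ennreal_plus)
  qed
  have "(\<integral>\<^sup>+ y. ennreal (kp p y) \<partial>lborel) \<le> (\<integral>\<^sup>+ y. ennreal (h1 y) + ennreal (g y) + ennreal (g (- y)) \<partial>lborel)"
    by (intro nn_integral_mono bd)
  also have "\<dots> = (\<integral>\<^sup>+ y. ennreal (h1 y) \<partial>lborel) + (\<integral>\<^sup>+ y. ennreal (g y) \<partial>lborel) + (\<integral>\<^sup>+ y. ennreal (g (- y)) \<partial>lborel)"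
    by (simp add: nn_integral_add)
  also have "\<dots> < \<infinity>"
  proof -
    have ind: "(\<integral>\<^sup>+ y. ennreal (h1 y) \<partial>lborel) = 2"
      by (simp add: h1_def ennreal_indicator)
    show ?thesis using gI gI2 ind by simp
  qed
  finally show ?thesis .
qed

lemma kp_lower:
  assumes p: "p > 0" and N: "N > 1" and y: "\<bar>y\<bar> \<le> N"
  shows "N powr (- p) \<le> kp p y"
proof (cases "\<bar>y\<bar> \<le> 1")
  case True
  have "N powr (- p) \<le> N powr 0" by (rule powr_mono) (use p N in auto)
  then show ?thesis using True N unfolding kp_def by simp
next
  case False
  then show ?thesis unfolding kp_def using y p by (auto intro!: powr_mono2')
qed

lemma inv4_finite:
  assumes d: "DIM('a::euclidean_space) \<le> 3"
  shows "(\<integral>\<^sup>+ \<xi>. ennreal (1 / (1 + (norm (\<xi>::'a))^4)) \<partial>lborel) < \<infinity>"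
proof -
  define d where "d = DIM('a)"
  define p where "p = 4 / real d"
  have d1: "d \<ge> 1" unfolding d_def by (simp add: DIM_positive Suc_leI)
  have p1: "p > 1" unfolding p_def using d d1 by (simp add: d_def field_simps)
  have pd: "real d * p = 4" unfolding p_def using d1 by simp
  have bd: "1 / (1 + (norm \<xi>)^4) \<le> (\<Prod>b\<in>(Basis::'a set). 2 * kp p (\<xi> \<bullet> b))" for \<xi> :: 'a
  proof (cases "norm \<xi> \<le> 1")
    case True
    have "(\<Prod>b\<in>(Basis::'a set). 2 * kp p (\<xi> \<bullet> b)) = (\<Prod>b\<in>(Basis::'a set). 2)"
    proof (intro prod.cong refl)
      fix b :: 'a assume "b \<in> Basis"
      then have "\<bar>\<xi> \<bullet> b\<bar> \<le> 1" using Basis_le_norm[of b \<xi>] True by simp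
      then show "2 * kp p (\<xi> \<bullet> b) = 2" unfolding kp_def by simp
    qed
    also have "\<dots> = 2 ^ d" by (simp add: d_def)
    finally have e: "(\<Prod>b\<in>(Basis::'a set). 2 * kp p (\<xi> \<bullet> b)) = 2 ^ d" .
    have l1: "1 \<le> (2::real) ^ d" by simp
    have l2: "1 / (1 + (norm \<xi>)^4) \<le> 1" by (simp add: divide_le_eq_1 add_pos_nonneg)
    show ?thesis unfolding e using order_trans[OF l2 l1] .
  next
    case False
    define N where "N = norm \<xi>"
    have N1: "N > 1" using False N_def by simp
    have "(\<Prod>b\<in>(Basis::'a set). 2 * N powr (- p)) \<le> (\<Prod>b\<in>(Basis::'a set). 2 * kp p (\<xi> \<bullet> b))"
    proof (intro prod_mono conjI)
      fix b :: 'a assume b: "b \<in> Basis"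
      show "0 \<le> 2 * N powr (- p)" by simp
      have "\<bar>\<xi> \<bullet> b\<bar> \<le> N" using Basis_le_norm[OF b, of \<xi>] N_def by simp
      then show "2 * N powr (- p) \<le> 2 * kp p (\<xi> \<bullet> b)"
        using kp_lower[of p N "\<xi> \<bullet> b"] p1 N1 by simp
    qed
    moreover have "(\<Prod>b\<in>(Basis::'a set). 2 * N powr (- p)) = 2 ^ d * N powr (- 4)"
    proof -
      have "(\<Prod>b\<in>(Basis::'a set). 2 * N powr (- p)) = (2 * N powr (- p)) ^ d"
        by (simp add: d_def)
      also have "\<dots> = 2 ^ d * (N powr (- p)) ^ d" by (simp add: power_mult_distrib)
      also have "(N powr (- p)) ^ d = N powr (real d * (- p))"
        using N1 by (subst powr_power) auto
      also have "real d * (- p) = - 4" using pd by simp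
      finally show ?thesis .
    qed
    moreover have "1 / (1 + N^4) \<le> 2 ^ d * N powr (- 4)"
    proof -
      have "N powr (- 4) = 1 / N ^ 4" using N1 by (simp add: powr_minus powr_realpow divide_inverse)
      moreover have "1 / (1 + N^4) \<le> 1 / N ^ 4"
      proof (intro divide_left_mono)
        have "0 < N ^ 4" using N1 by simp
        moreover have "0 < 1 + N ^ 4" using N1 by (simp add: add_pos_pos)
        ultimately show "0 < (1 + N ^ 4) * N ^ 4" by simp
      qed simp_all
      moreover have "1 / N ^ 4 \<le> 2 ^ d * (1 / N ^ 4)"
        by (rule mult_le_cancel_right1[THEN iffD2]) (use N1 in simp)
      ultimately show ?thesis by simp
    qed
    ultimately show ?thesis unfolding N_def by simp
  qed
  have "(\<integral>\<^sup>+ \<xi>. ennreal (1 / (1 + (norm (\<xi>::'a))^4)) \<partial>lborel)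
      \<le> (\<integral>\<^sup>+ \<xi>. (\<Prod>b\<in>(Basis::'a set). (\<lambda>b y. ennreal (2 * kp p y)) b (\<xi> \<bullet> b)) \<partial>lborel)"
    by (intro nn_integral_mono) (simp add: prod_ennreal kp_nonneg ennreal_leI[OF bd])
  also have "\<dots> = (\<Prod>b\<in>(Basis::'a set). \<integral>\<^sup>+ y. ennreal (2 * kp p y) \<partial>lborel)"
    by (rule nn_integral_lborel_prod) auto
  also have "\<dots> < \<infinity>"
  proof -
    have "(\<integral>\<^sup>+ y. ennreal (2 * kp p y) \<partial>lborel) = 2 * (\<integral>\<^sup>+ y. ennreal (kp p y) \<partial>lborel)"
      by (simp add: ennreal_mult nn_integral_cmult kp_nonneg)
    also have "\<dots> < \<infinity>" using kp_finite[OF p1] by (simp add: ennreal_mult_less_top)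
    finally show ?thesis by (simp add: power_less_top_ennreal)
  qed
  finally show ?thesis .
qed

lemma inv4_scale:
  assumes a: "a > 0"
  shows "(\<integral>\<^sup>+ \<xi>. ennreal (1 / (1 + a * (norm (\<xi>::'a::euclidean_space))^4)) \<partial>lborel)
       = ennreal (a powr (- real DIM('a) / 4)) * (\<integral>\<^sup>+ \<xi>. ennreal (1 / (1 + (norm (\<xi>::'a))^4)) \<partial>lborel)"
proof -
  define c where "c = a powr (- 1 / 4)"
  have c0: "c > 0" unfolding c_def using a by simp
  have c4: "a * c ^ 4 = 1"
    unfolding c_def using a by (simp add: powr_power powr_add[symmetric] powr_minus field_simps)
  have cd: "\<bar>c\<bar> ^ DIM('a) = a powr (- real DIM('a) / 4)"
    unfolding c_def using a by (simp add: powr_power)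
  have "(\<integral>\<^sup>+ \<xi>. ennreal (1 / (1 + a * (norm (\<xi>::'a))^4)) \<partial>lborel)
      = (\<integral>\<^sup>+ \<xi>. ennreal (1 / (1 + a * (norm (\<xi>::'a))^4)) \<partial>density (distr lborel borel (\<lambda>x. 0 + c *\<^sub>R x)) (\<lambda>_. ennreal (\<bar>c\<bar> ^ DIM('a))))"
    by (subst lborel_affine[OF c0[THEN less_imp_neq, symmetric], of 0]) (rule refl)
  also have "\<dots> = (\<integral>\<^sup>+ \<xi>. ennreal (\<bar>c\<bar> ^ DIM('a)) * ennreal (1 / (1 + a * (norm (c *\<^sub>R \<xi>))^4)) \<partial>(lborel::'a measure))"
    by (simp add: nn_integral_density nn_integral_distr)
  also have "\<dots> = (\<integral>\<^sup>+ \<xi>. ennreal (\<bar>c\<bar> ^ DIM('a)) * ennreal (1 / (1 + (norm \<xi>)^4)) \<partial>(lborel::'a measure))"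
  proof (intro nn_integral_cong)
    fix \<xi> :: 'a
    have "a * (norm (c *\<^sub>R \<xi>))^4 = (a * c ^ 4) * (norm \<xi>)^4" using c0 by (simp add: power_mult_distrib)
    then show "ennreal (\<bar>c\<bar> ^ DIM('a)) * ennreal (1 / (1 + a * (norm (c *\<^sub>R \<xi>))^4)) = ennreal (\<bar>c\<bar> ^ DIM('a)) * ennreal (1 / (1 + (norm \<xi>)^4))"
      using c4 by simp
  qed
  also have "\<dots> = ennreal (\<bar>c\<bar> ^ DIM('a)) * (\<integral>\<^sup>+ \<xi>. ennreal (1 / (1 + (norm (\<xi>::'a))^4)) \<partial>lborel)"
    by (simp add: nn_integral_cmult)
  finally show ?thesis unfolding cd .
qed

lemma nn_integral_exponential_density: "l > 0 \<Longrightarrow> (\<integral>\<^sup>+x. ennreal (exponential_density l x) \<partial>lborel) = 1"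
proof -
  assume l: "l > 0"
  then interpret prob_space "density lborel (exponential_density l)" by (rule prob_space_exponential_density)
  have "emeasure (density lborel (exponential_density l)) UNIV = 1"
    using emeasure_space_1 by simp
  then show ?thesis by (simp add: emeasure_density)
qed

lemma exp_tail:
  assumes \<psi>: "\<psi> > 0"
  shows "(\<integral>\<^sup>+ s. ennreal (indicator {..c} s * exp (- 2 * (c - s) * \<psi>)) \<partial>lborel) = ennreal (1 / (2 * \<psi>))"
proof -
  have "(\<integral>\<^sup>+ s. ennreal (indicator {..c} s * exp (- 2 * (c - s) * \<psi>)) \<partial>lborel)
     = ennreal \<bar>-1\<bar> * (\<integral>\<^sup>+ u. ennreal (indicator {..c} (c + (-1) * u) * exp (- 2 * (c - (c + (-1) * u)) * \<psi>)) \<partial>lborel)"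
    by (rule nn_integral_real_affine) auto
  also have "\<dots> = (\<integral>\<^sup>+ u. ennreal (1 / (2 * \<psi>)) * ennreal (exponential_density (2 * \<psi>) u) \<partial>lborel)"
  proof -
    have "\<And>u. ennreal (indicator {..c} (c + (-1) * u) * exp (- 2 * (c - (c + (-1) * u)) * \<psi>))
        = ennreal (1 / (2 * \<psi>)) * ennreal (exponential_density (2 * \<psi>) u)"
      using \<psi> by (simp add: exponential_density_def indicator_def ennreal_mult[symmetric] mult_ac)
    then show ?thesis by simp
  qed
  also have "\<dots> = ennreal (1 / (2 * \<psi>))"
    using \<psi> by (simp add: nn_integral_cmult nn_integral_exponential_density)
  finally show ?thesis .
qed

lemma one_minus_exp_le:
  assumes "(y::real) \<ge> 0"
  shows "1 - exp (- y) \<le> y" and "0 \<le> 1 - exp (- y)" and "1 - exp (- y) \<le> 1"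
proof -
  show "1 - exp (- y) \<le> y" using exp_ge_add_one_self[of "-y"] by simp
  show "0 \<le> 1 - exp (- y)" using assms by simp
  show "1 - exp (- y) \<le> 1" by simp
qed

definition Eg :: "real \<Rightarrow> real \<Rightarrow> real" where
  "Eg \<psi> \<tau> = (if \<tau> < 0 then 0 else exp (- \<tau> * \<psi>))"

lemma s_bound:
  assumes \<psi>0: "\<psi> \<ge> 0" and rt: "0 < r" "r < t"
  shows "(\<integral>\<^sup>+ s. ennreal ((Eg \<psi> (t - s) - Eg \<psi> (r - s))\<^sup>2) * indicator {0..t} s \<partial>lborel)
       \<le> ennreal (3 * (t - r) / (1 + (t - r) * \<psi>))"
proof -
  define h where "h = t - r"
  have h0: "h > 0" using rt h_def by simp
  define y where "y = h * \<psi>"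
  have y0: "y \<ge> 0" using h0 \<psi>0 y_def by simp
  define D where "D = 1 - exp (- y)"
  have D: "0 \<le> D" "D \<le> 1" "D \<le> y" using one_minus_exp_le[OF y0] D_def by auto
  define A1f where "A1f s = indicator {..r} s * exp (- 2 * (r - s) * \<psi>) * D\<^sup>2" for s
  define A2f where "A2f s = indicator {r<..t} s * exp (- 2 * (t - s) * \<psi>)" for s
  have pw: "ennreal ((Eg \<psi> (t - s) - Eg \<psi> (r - s))\<^sup>2) * indicator {0..t} s \<le> ennreal (A1f s) + ennreal (A2f s)" for s
  proof (cases "s \<in> {0..t}")
    case False then show ?thesis by simp
  next
    case True
    show ?thesis
    proof (cases "s \<le> r")
      case sr: True
      have "exp (- (t - s) * \<psi>) = exp (- (r - s) * \<psi>) * exp (- y)"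
        unfolding y_def h_def by (simp add: exp_add[symmetric] algebra_simps)
      then have "(Eg \<psi> (t - s) - Eg \<psi> (r - s))\<^sup>2 = (exp (- (r - s) * \<psi>))\<^sup>2 * D\<^sup>2"
        unfolding Eg_def D_def using sr rt by (simp add: power2_eq_square algebra_simps)
      also have "(exp (- (r - s) * \<psi>))\<^sup>2 = exp (- 2 * (r - s) * \<psi>)"
        by (simp add: power2_eq_square exp_add[symmetric] algebra_simps)
      finally have "(Eg \<psi> (t - s) - Eg \<psi> (r - s))\<^sup>2 = A1f s"
        unfolding A1f_def using sr by simp
      then show ?thesis using True by (simp add: A2f_def)
    next
      case sr: False
      have "(Eg \<psi> (t - s) - Eg \<psi> (r - s))\<^sup>2 = A2f s"
        unfolding Eg_def A2f_def using sr True
        by (simp add: power2_eq_square exp_add[symmetric] algebra_simps)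
      then show ?thesis using True by (simp add: A1f_def)
    qed
  qed
  have A1m[measurable]: "A1f \<in> borel_measurable borel" unfolding A1f_def by measurable
  have A2m[measurable]: "A2f \<in> borel_measurable borel" unfolding A2f_def by measurable
  have A1: "(\<integral>\<^sup>+ s. ennreal (A1f s) \<partial>lborel) \<le> ennreal (h / (1 + y))"
  proof (cases "\<psi> = 0")
    case True
    then have "D = 0" unfolding D_def y_def by simp
    then show ?thesis unfolding A1f_def by simp
  next
    case False
    then have \<psi>p: "\<psi> > 0" using \<psi>0 by simp
    have "(\<integral>\<^sup>+ s. ennreal (A1f s) \<partial>lborel) = (\<integral>\<^sup>+ s. ennreal (indicator {..r} s * exp (- 2 * (r - s) * \<psi>)) * ennreal (D\<^sup>2) \<partial>lborel)"
      unfolding A1f_def by (simp add: ennreal_mult[symmetric])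
    also have "\<dots> = ennreal (1 / (2 * \<psi>)) * ennreal (D\<^sup>2)"
      by (subst nn_integral_multc) (simp_all only: exp_tail[OF \<psi>p], measurable)
    also have "\<dots> = ennreal (D\<^sup>2 / (2 * \<psi>))"
      using \<psi>p by (simp add: ennreal_mult[symmetric])
    also have "\<dots> \<le> ennreal (h / (1 + y))"
    proof (intro ennreal_leI)
      have "D\<^sup>2 \<le> y" using D by (metis mult_left_le power2_eq_square order_trans)
      moreover have "y * D\<^sup>2 \<le> y" using D y0 by (metis mult_left_le power2_eq_square mult_le_one)
      ultimately have "D\<^sup>2 * (1 + y) \<le> 2 * y" by (simp add: algebra_simps)
      moreover have p: "0 < 1 + h * \<psi>" using y0 unfolding y_def by simp
      ultimately show "D\<^sup>2 / (2 * \<psi>) \<le> h / (1 + y)"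
        using \<psi>p h0 unfolding y_def by (simp add: field_simps)
    qed
    finally show ?thesis .
  qed
  have A2: "(\<integral>\<^sup>+ s. ennreal (A2f s) \<partial>lborel) \<le> ennreal (2 * h / (1 + y))"
  proof -
    have a: "(\<integral>\<^sup>+ s. ennreal (A2f s) \<partial>lborel) \<le> ennreal h"
    proof -
      have "(\<integral>\<^sup>+ s. ennreal (A2f s) \<partial>lborel) \<le> (\<integral>\<^sup>+ s. indicator {r<..t} s \<partial>lborel)"
        unfolding A2f_def using \<psi>0
        by (intro nn_integral_mono) (auto simp: indicator_def mult_nonpos_nonneg)
      also have "\<dots> = ennreal h" using rt h_def by simp
      finally show ?thesis .
    qed
    show ?thesis
    proof (cases "y \<le> 1")
      case True
      have "h \<le> 2 * h / (1 + y)" using True y0 h0 by (simp add: field_simps)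
      then show ?thesis using a by (meson ennreal_leI order_trans)
    next
      case False
      then have \<psi>p: "\<psi> > 0" using y_def \<psi>0 by (cases "\<psi> = 0") auto
      have "(\<integral>\<^sup>+ s. ennreal (A2f s) \<partial>lborel) \<le> (\<integral>\<^sup>+ s. ennreal (indicator {..t} s * exp (- 2 * (t - s) * \<psi>)) \<partial>lborel)"
        unfolding A2f_def by (intro nn_integral_mono ennreal_leI) (auto simp: indicator_def)
      also have "\<dots> = ennreal (1 / (2 * \<psi>))" by (rule exp_tail[OF \<psi>p])
      also have "\<dots> \<le> ennreal (2 * h / (1 + y))"
      proof (intro ennreal_leI)
        have "1 + y \<le> 4 * y" using False by simp
        moreover have p: "0 < 1 + h * \<psi>" using y0 unfolding y_def by simp
        ultimately show "1 / (2 * \<psi>) \<le> 2 * h / (1 + y)"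
          using \<psi>p h0 False unfolding y_def by (simp add: field_simps)
      qed
      finally show ?thesis .
    qed
  qed
  have "(\<integral>\<^sup>+ s. ennreal ((Eg \<psi> (t - s) - Eg \<psi> (r - s))\<^sup>2) * indicator {0..t} s \<partial>lborel)
      \<le> (\<integral>\<^sup>+ s. ennreal (A1f s) + ennreal (A2f s) \<partial>lborel)"
    by (intro nn_integral_mono pw)
  also have "\<dots> = (\<integral>\<^sup>+ s. ennreal (A1f s) \<partial>lborel) + (\<integral>\<^sup>+ s. ennreal (A2f s) \<partial>lborel)"
    by (simp add: nn_integral_add)
  also have "\<dots> \<le> ennreal (h / (1 + y)) + ennreal (2 * h / (1 + y))"
    by (intro add_mono A1 A2)
  also have "\<dots> = ennreal (3 * h / (1 + y))"
    using h0 y0 by (simp add: ennreal_plus[symmetric] add_divide_distrib[symmetric] del: ennreal_plus)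
  finally show ?thesis unfolding h_def y_def .
qed

definition Kg :: "('a::euclidean_space \<Rightarrow> real) \<Rightarrow> real \<Rightarrow> 'a \<Rightarrow> real" where
  "Kg \<psi> \<tau> x = (if \<tau> < 0 then 0 else
     (1 / (2 * pi) ^ DIM('a)) * (\<integral>\<xi>. exp (- \<tau> * \<psi> \<xi>) * cos (\<xi> \<bullet> x) \<partial>lborel))"

lemma exp_le_inv: "(z::real) \<ge> 0 \<Longrightarrow> exp (- z) \<le> 1 / (1 + z)"
proof -
  assume z: "z \<ge> 0"
  have "1 + z \<le> exp z" by (rule exp_ge_add_one_self)
  then show ?thesis using z by (simp add: exp_minus field_simps)
qed

locale psi_setup =
  fixes \<psi> :: "'a::euclidean_space \<Rightarrow> real" and \<kappa> R :: real
  assumes \<psi>m[measurable]: "\<psi> \<in> borel_measurable borel"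
    and \<psi>0: "\<And>\<xi>. \<psi> \<xi> \<ge> 0"
    and \<kappa>: "\<kappa> > 0" and R: "R \<ge> 0"
    and \<psi>big: "\<And>\<xi>. norm \<xi> \<ge> R \<Longrightarrow> \<kappa> * (norm \<xi>)^4 \<le> \<psi> \<xi>"
    and dim3: "DIM('a) \<le> 3"
begin

lemma I0_finite: "(\<integral>\<^sup>+ \<xi>. ennreal (1 / (1 + a * (norm (\<xi>::'a))^4)) \<partial>lborel) < \<infinity>" if a: "a > 0"
  using inv4_scale[OF a, where 'a='a] inv4_finite[OF dim3] by (simp add: ennreal_mult_less_top)

lemma exp_bound:
  assumes \<tau>: "\<tau> > 0"
  shows "exp (- \<tau> * \<psi> \<xi>) \<le> indicator (cball 0 R) \<xi> + 1 / (1 + (\<tau> * \<kappa>) * (norm \<xi>)^4)"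
proof (cases "norm \<xi> \<le> R")
  case True
  have e1: "exp (- \<tau> * \<psi> \<xi>) \<le> 1" using \<tau> \<psi>0[of \<xi>] by simp
  have "0 \<le> 1 / (1 + (\<tau> * \<kappa>) * (norm \<xi>)^4)" using \<tau> \<kappa> by simp
  then have e2: "1 \<le> indicator (cball 0 R) \<xi> + 1 / (1 + (\<tau> * \<kappa>) * (norm \<xi>)^4)"
    using True by (simp add: indicator_def mem_cball_0)
  show ?thesis by (rule order_trans[OF e1 e2])
next
  case False
  have "\<tau> * (\<kappa> * (norm \<xi>)^4) \<le> \<tau> * \<psi> \<xi>" using \<psi>big[of \<xi>] False \<tau> by simp
  then have "exp (- \<tau> * \<psi> \<xi>) \<le> exp (- ((\<tau> * \<kappa>) * (norm \<xi>)^4))" by (simp add: mult.assoc)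
  also have "\<dots> \<le> 1 / (1 + (\<tau> * \<kappa>) * (norm \<xi>)^4)" by (rule exp_le_inv) (use \<tau> \<kappa> in simp)
  finally show ?thesis using False by (simp add: indicator_def mem_cball_0)
qed

lemma exp_integrable:
  assumes \<tau>: "\<tau> > 0"
  shows "integrable lborel (\<lambda>\<xi>::'a. exp (- \<tau> * \<psi> \<xi>))"
proof (rule integrableI_bounded)
  show "(\<lambda>\<xi>::'a. exp (- \<tau> * \<psi> \<xi>)) \<in> borel_measurable lborel" by measurable
  have "(\<integral>\<^sup>+ \<xi>. ennreal (norm (exp (- \<tau> * \<psi> \<xi>))) \<partial>lborel)
      \<le> (\<integral>\<^sup>+ \<xi>. ennreal (indicator (cball 0 R) \<xi>) + ennreal (1 / (1 + (\<tau> * \<kappa>) * (norm (\<xi>::'a))^4)) \<partial>lborel)"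
  proof (intro nn_integral_mono)
    fix \<xi> :: 'a
    have "ennreal (norm (exp (- \<tau> * \<psi> \<xi>))) = ennreal (exp (- \<tau> * \<psi> \<xi>))" by simp
    also have "\<dots> \<le> ennreal (indicator (cball 0 R) \<xi> + 1 / (1 + (\<tau> * \<kappa>) * (norm \<xi>)^4))"
      by (rule ennreal_leI[OF exp_bound[OF \<tau>]])
    also have "\<dots> = ennreal (indicator (cball 0 R) \<xi>) + ennreal (1 / (1 + (\<tau> * \<kappa>) * (norm \<xi>)^4))"
      using \<tau> \<kappa> by (intro ennreal_plus) auto
    finally show "ennreal (norm (exp (- \<tau> * \<psi> \<xi>))) \<le> ennreal (indicator (cball 0 R) \<xi>) + ennreal (1 / (1 + (\<tau> * \<kappa>) * (norm \<xi>)^4))" .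
  qed
  also have "\<dots> = emeasure lborel (cball (0::'a) R) + (\<integral>\<^sup>+ \<xi>. ennreal (1 / (1 + (\<tau> * \<kappa>) * (norm (\<xi>::'a))^4)) \<partial>lborel)"
    by (subst nn_integral_add) (auto simp: ennreal_indicator intro!: borel_measurable_indicator borel_closed)
  also have "\<dots> < \<infinity>"
    using emeasure_lborel_cball_finite[of "0::'a" R] I0_finite[of "\<tau> * \<kappa>"] \<tau> \<kappa> by simp
  finally show "(\<integral>\<^sup>+ \<xi>. ennreal (norm (exp (- \<tau> * \<psi> \<xi>))) \<partial>lborel) < \<infinity>" .
qed

lemma Eg_integrable: "\<tau> \<noteq> 0 \<Longrightarrow> integrable lborel (\<lambda>\<xi>::'a. Eg (\<psi> \<xi>) \<tau>)"
  unfolding Eg_def using exp_integrable[of \<tau>] by (cases "\<tau> < 0") (auto simp: mult.commute)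

lemma Kg_eq: "\<tau> \<noteq> 0 \<Longrightarrow> Kg \<psi> \<tau> x = (1 / (2 * pi) ^ DIM('a)) * (\<integral>\<xi>. Eg (\<psi> \<xi>) \<tau> * cos (\<xi> \<bullet> x) \<partial>lborel)"
  unfolding Kg_def Eg_def by (cases "\<tau> < 0") (auto simp: mult.commute)

end

context psi_setup
begin

definition V where "V = measure lborel (cball (0::'a) R)"
definition I0 where "I0 = enn2real (\<integral>\<^sup>+ \<xi>. ennreal (1 / (1 + (norm (\<xi>::'a))^4)) \<partial>lborel)"

lemma V_eq: "emeasure lborel (cball (0::'a) R) = ennreal V"
  unfolding V_def using emeasure_lborel_cball_finite[of "0::'a" R]
  by (simp add: emeasure_eq_ennreal_measure less_top)

lemma I0_eq: "(\<integral>\<^sup>+ \<xi>. ennreal (1 / (1 + (norm (\<xi>::'a))^4)) \<partial>lborel) = ennreal I0"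
  unfolding I0_def using inv4_finite[OF dim3] by (simp add: ennreal_enn2real less_top)

lemma V0: "V \<ge> 0" unfolding V_def by simp
lemma I00: "I0 \<ge> 0" unfolding I0_def by simp

lemma xi_bound:
  assumes h: "0 < h" "h \<le> T"
  shows "(\<integral>\<^sup>+ \<xi>. ennreal (3 * h / (1 + h * \<psi> (\<xi>::'a))) \<partial>lborel)
     \<le> ennreal ((3 * V * T powr (real DIM('a) / 4) + 3 * \<kappa> powr (- real DIM('a) / 4) * I0) * h powr ((4 - real DIM('a)) / 4))"
proof -
  define d where "d = real DIM('a)"
  define a where "a = (4 - d) / 4"
  have pb: "ennreal (3 * h / (1 + h * \<psi> \<xi>)) \<le> ennreal (3 * h) * ennreal (indicator (cball 0 R) \<xi>) + ennreal (3 * h) * ennreal (1 / (1 + (h * \<kappa>) * (norm \<xi>)^4))" for \<xi> :: 'a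
  proof -
    have "3 * h / (1 + h * \<psi> \<xi>) \<le> 3 * h * indicator (cball 0 R) \<xi> + 3 * h * (1 / (1 + (h * \<kappa>) * (norm \<xi>)^4))"
    proof (cases "norm \<xi> \<le> R")
      case True
      have "3 * h / (1 + h * \<psi> \<xi>) \<le> 3 * h"
      proof -
        have "0 < 1 + h * \<psi> \<xi>" using h \<psi>0[of \<xi>] by (simp add: add_pos_nonneg)
        then show ?thesis using divide_left_mono[of 1 "1 + h * \<psi> \<xi>" "3 * h"] h \<psi>0[of \<xi>] by simp
      qed
      moreover have "0 \<le> 3 * h * (1 / (1 + (h * \<kappa>) * (norm \<xi>)^4))" using h \<kappa> by simp
      ultimately show ?thesis using True by (simp add: indicator_def mem_cball_0)
    next
      case False
      have "h * (\<kappa> * (norm \<xi>)^4) \<le> h * \<psi> \<xi>" using \<psi>big[of \<xi>] False h by simp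
      then have "3 * h / (1 + h * \<psi> \<xi>) \<le> 3 * h / (1 + (h * \<kappa>) * (norm \<xi>)^4)"
        using h \<kappa> \<psi>0[of \<xi>] by (intro divide_left_mono) (auto simp: mult.assoc intro!: mult_pos_pos add_pos_nonneg)
      then show ?thesis using False by (simp add: indicator_def mem_cball_0)
    qed
    then show ?thesis using h \<kappa>
      by (simp add: ennreal_mult[symmetric] ennreal_plus[symmetric] del: ennreal_plus)
  qed
  have "(\<integral>\<^sup>+ \<xi>. ennreal (3 * h / (1 + h * \<psi> (\<xi>::'a))) \<partial>lborel)
     \<le> (\<integral>\<^sup>+ \<xi>. ennreal (3 * h) * ennreal (indicator (cball 0 R) \<xi>) + ennreal (3 * h) * ennreal (1 / (1 + (h * \<kappa>) * (norm (\<xi>::'a))^4)) \<partial>lborel)"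
    by (intro nn_integral_mono pb)
  also have "\<dots> = ennreal (3 * h) * emeasure lborel (cball (0::'a) R) + ennreal (3 * h) * (\<integral>\<^sup>+ \<xi>. ennreal (1 / (1 + (h * \<kappa>) * (norm (\<xi>::'a))^4)) \<partial>lborel)"
  proof -
    have m1: "(\<lambda>\<xi>::'a. ennreal (3 * h) * ennreal (indicator (cball 0 R) \<xi>)) \<in> borel_measurable borel"
      unfolding ennreal_indicator by (intro borel_measurable_times_ennreal borel_measurable_const borel_measurable_indicator borel_closed closed_cball)
    have m2: "(\<lambda>\<xi>::'a. ennreal (3 * h) * ennreal (1 / (1 + (h * \<kappa>) * (norm (\<xi>::'a))^4))) \<in> borel_measurable borel"
      by measurable
    have e1: "(\<integral>\<^sup>+ \<xi>. ennreal (3 * h) * ennreal (indicator (cball 0 R) \<xi>) \<partial>(lborel::'a measure)) = ennreal (3 * h) * emeasure lborel (cball (0::'a) R)"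
      unfolding ennreal_indicator by (subst nn_integral_cmult_indicator) auto
    have e2: "(\<integral>\<^sup>+ \<xi>. ennreal (3 * h) * ennreal (1 / (1 + (h * \<kappa>) * (norm (\<xi>::'a))^4)) \<partial>lborel) = ennreal (3 * h) * (\<integral>\<^sup>+ \<xi>. ennreal (1 / (1 + (h * \<kappa>) * (norm (\<xi>::'a))^4)) \<partial>lborel)"
      by (rule nn_integral_cmult) measurable
    show ?thesis
      by (subst nn_integral_add) (use m1 m2 e1 e2 in auto)
  qed
  also have "\<dots> = ennreal (3 * h * V + 3 * h * ((h * \<kappa>) powr (- d / 4) * I0))"
    using h \<kappa> V0 I00
    by (simp add: V_eq inv4_scale I0_eq d_def ennreal_mult[symmetric] ennreal_plus[symmetric] del: ennreal_plus)
  also have "\<dots> \<le> ennreal ((3 * V * T powr (d / 4) + 3 * \<kappa> powr (- d / 4) * I0) * h powr a)"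
  proof (intro ennreal_leI)
    have hh: "h = h powr a * h powr (d / 4)"
      using h unfolding a_def by (simp add: powr_add[symmetric] field_simps)
    have hT: "h powr (d / 4) \<le> T powr (d / 4)"
      using h by (intro powr_mono2) (auto simp: d_def)
    have t1: "3 * h * V \<le> 3 * V * T powr (d / 4) * h powr a"
    proof -
      have "3 * h * V = 3 * V * (h powr (d / 4)) * h powr a" by (subst hh) (simp add: mult_ac)
      also have "\<dots> \<le> 3 * V * T powr (d / 4) * h powr a"
        using hT V0 by (intro mult_right_mono mult_left_mono) auto
      finally show ?thesis .
    qed
    have t2: "3 * h * ((h * \<kappa>) powr (- d / 4) * I0) = 3 * \<kappa> powr (- d / 4) * I0 * h powr a"
    proof -
      have "(h * \<kappa>) powr (- d / 4) = h powr (- d / 4) * \<kappa> powr (- d / 4)"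
        using h \<kappa> by (simp add: powr_mult)
      moreover have "h * h powr (- d / 4) = h powr a"
        using h unfolding a_def by (simp add: powr_add[symmetric] field_simps powr_mult_base)
      ultimately show ?thesis by (simp add: mult_ac)
    qed
    show "3 * h * V + 3 * h * ((h * \<kappa>) powr (- d / 4) * I0) \<le> (3 * V * T powr (d / 4) + 3 * \<kappa> powr (- d / 4) * I0) * h powr a"
      unfolding distrib_right t2 using t1 by (rule add_right_mono)
  qed
  finally show ?thesis unfolding a_def d_def .
qed


lemma Eg_range: "v \<ge> 0 \<Longrightarrow> 0 \<le> Eg v \<tau> \<and> Eg v \<tau> \<le> 1"
  unfolding Eg_def by auto

lemma K_plancherel:
  assumes \<tau>1: "0 < \<tau>1" and \<tau>2: "\<tau>2 \<noteq> 0"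
  shows "(\<integral>\<^sup>+x. ennreal ((Kg \<psi> \<tau>1 x - Kg \<psi> \<tau>2 x)\<^sup>2) \<partial>(lborel::'a measure))
    \<le> ennreal (1 / (2 * pi) ^ DIM('a)) * (\<integral>\<^sup>+\<xi>. ennreal ((Eg (\<psi> \<xi>) \<tau>1 - Eg (\<psi> \<xi>) \<tau>2)\<^sup>2) \<partial>(lborel::'a measure))"
proof -
  define f where "f \<xi> = Eg (\<psi> \<xi>) \<tau>1 - Eg (\<psi> \<xi>) \<tau>2" for \<xi> :: 'a
  define c1 :: real where "c1 = 1 / (2 * pi) ^ DIM('a)"
  have c10: "c1 > 0" unfolding c1_def by simp
  have fm[measurable]: "f \<in> borel_measurable borel" unfolding f_def Eg_def by measurable
  have i1: "integrable lborel (\<lambda>\<xi>::'a. Eg (\<psi> \<xi>) \<tau>1)" using Eg_integrable \<tau>1 by simp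
  have i2: "integrable lborel (\<lambda>\<xi>::'a. Eg (\<psi> \<xi>) \<tau>2)" using Eg_integrable \<tau>2 by simp
  have fi: "integrable lborel f" unfolding f_def by (rule Bochner_Integration.integrable_diff[OF i1 i2])
  have fb: "\<bar>f \<xi>\<bar> \<le> 1" for \<xi>
    using Eg_range[OF \<psi>0[of \<xi>], of \<tau>1] Eg_range[OF \<psi>0[of \<xi>], of \<tau>2] unfolding f_def by auto
  define X where "X x = (\<integral>\<xi>. f \<xi> * cos (\<xi> \<bullet> x) \<partial>lborel)" for x :: 'a
  have Xm[measurable]: "X \<in> borel_measurable borel" unfolding X_def by measurable
  have keq: "Kg \<psi> \<tau>1 x - Kg \<psi> \<tau>2 x = c1 * X x" for x
  proof -
    have "Kg \<psi> \<tau>1 x - Kg \<psi> \<tau>2 x = c1 * ((\<integral>\<xi>. Eg (\<psi> \<xi>) \<tau>1 * cos (\<xi> \<bullet> x) \<partial>lborel) - (\<integral>\<xi>. Eg (\<psi> \<xi>) \<tau>2 * cos (\<xi> \<bullet> x) \<partial>lborel))"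
      using \<tau>1 \<tau>2 by (simp add: Kg_eq c1_def right_diff_distrib)
    also have "(\<integral>\<xi>. Eg (\<psi> \<xi>) \<tau>1 * cos (\<xi> \<bullet> x) \<partial>lborel) - (\<integral>\<xi>. Eg (\<psi> \<xi>) \<tau>2 * cos (\<xi> \<bullet> x) \<partial>lborel)
        = (\<integral>\<xi>. Eg (\<psi> \<xi>) \<tau>1 * cos (\<xi> \<bullet> x) - Eg (\<psi> \<xi>) \<tau>2 * cos (\<xi> \<bullet> x) \<partial>lborel)"
      by (rule Bochner_Integration.integral_diff[symmetric]; rule fcos_integrable[OF i1] fcos_integrable[OF i2])
    also have "\<dots> = X x" unfolding X_def f_def by (simp add: left_diff_distrib)
    finally show ?thesis .
  qed
  have f2i: "integrable lborel (\<lambda>\<xi>. (f \<xi>)\<^sup>2)"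
  proof (rule Bochner_Integration.integrable_bound[of _ "\<lambda>x. \<bar>f x\<bar>"])
    show "integrable lborel (\<lambda>x. \<bar>f x\<bar>)" using fi by simp
    show "AE x in lborel. norm ((f x)\<^sup>2) \<le> norm \<bar>f x\<bar>"
    proof (intro AE_I2)
      fix x
      have "(f x)\<^sup>2 = \<bar>f x\<bar> * \<bar>f x\<bar>" by (simp add: power2_eq_square)
      also have "\<dots> \<le> 1 * \<bar>f x\<bar>" using fb[of x] by (intro mult_right_mono) auto
      finally show "norm ((f x)\<^sup>2) \<le> norm \<bar>f x\<bar>" by simp
    qed
  qed simp
  have "(\<integral>\<^sup>+x. ennreal ((Kg \<psi> \<tau>1 x - Kg \<psi> \<tau>2 x)\<^sup>2) \<partial>(lborel::'a measure))
      = (\<integral>\<^sup>+x. ennreal (c1\<^sup>2) * ennreal ((X x)\<^sup>2) \<partial>lborel)"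
    by (simp add: keq power_mult_distrib ennreal_mult[symmetric])
  also have "\<dots> = ennreal (c1\<^sup>2) * (\<integral>\<^sup>+x. ennreal ((X x)\<^sup>2) \<partial>lborel)"
    by (rule nn_integral_cmult) measurable
  also have "\<dots> \<le> ennreal (c1\<^sup>2) * ennreal ((2*pi)^DIM('a) * (\<integral>\<xi>. (f \<xi>)\<^sup>2 \<partial>lborel))"
    unfolding X_def by (intro mult_left_mono plancherel_le[OF fm fi fb]) simp
  also have "\<dots> = ennreal c1 * ennreal (\<integral>\<xi>. (f \<xi>)\<^sup>2 \<partial>lborel)"
  proof -
    have "c1\<^sup>2 * ((2*pi)^DIM('a) * (\<integral>\<xi>. (f \<xi>)\<^sup>2 \<partial>lborel)) = c1 * (\<integral>\<xi>. (f \<xi>)\<^sup>2 \<partial>lborel)"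
      unfolding c1_def by (simp add: power2_eq_square)
    moreover have "0 \<le> (\<integral>\<xi>. (f \<xi>)\<^sup>2 \<partial>lborel)" by (rule integral_nonneg_AE) simp
    ultimately show ?thesis using c10 by (simp add: ennreal_mult[symmetric])
  qed
  also have "ennreal (\<integral>\<xi>. (f \<xi>)\<^sup>2 \<partial>lborel) = (\<integral>\<^sup>+\<xi>. ennreal ((f \<xi>)\<^sup>2) \<partial>lborel)"
    by (rule nn_integral_eq_integral[symmetric]) (use f2i in auto)
  finally show ?thesis unfolding c1_def f_def .
qed


theorem main_bound:
  assumes T: "T > 0"
  shows "\<exists>C::real. \<forall>r t. 0 < r \<and> r < t \<and> t \<le> T \<longrightarrow>
            (\<integral>\<^sup>+ s \<in> {0..t}. (\<integral>\<^sup>+ x. ennreal ((Kg \<psi> (t - s) x - Kg \<psi> (r - s) (x::'a))\<^sup>2) \<partial>lborel) \<partial>lborel)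
            \<le> ennreal (C * (t - r) powr ((4 - real DIM('a)) / 4))"
proof -
  define c1 :: real where "c1 = 1 / (2 * pi) ^ DIM('a)"
  define C1 where "C1 = 3 * V * T powr (real DIM('a) / 4) + 3 * \<kappa> powr (- real DIM('a) / 4) * I0"
  have c10: "c1 \<ge> 0" unfolding c1_def by simp
  have C10: "C1 \<ge> 0" unfolding C1_def using V0 I00 by simp
  show ?thesis
  proof (intro exI[of _ "c1 * C1"] allI impI)
    fix r t :: real assume rt: "0 < r \<and> r < t \<and> t \<le> T"
    have mono_c: "\<And>x y. x \<le> y \<Longrightarrow> ennreal c1 * x \<le> ennreal c1 * y"
      by (rule mult_left_mono) simp_all
    define Q where "Q s \<xi> = ennreal ((Eg (\<psi> \<xi>) (t - s) - Eg (\<psi> \<xi>) (r - s))\<^sup>2)" for s and \<xi> :: 'a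
    have Qm[measurable]: "(\<lambda>(s, \<xi>). Q s \<xi> * indicator {0..t} s) \<in> borel_measurable (lborel \<Otimes>\<^sub>M (lborel::'a measure))"
      unfolding Q_def Eg_def by measurable
    have step1: "(\<integral>\<^sup>+ s \<in> {0..t}. (\<integral>\<^sup>+ x. ennreal ((Kg \<psi> (t - s) x - Kg \<psi> (r - s) (x::'a))\<^sup>2) \<partial>lborel) \<partial>lborel)
        \<le> (\<integral>\<^sup>+ s. ennreal c1 * (\<integral>\<^sup>+ \<xi>. Q s \<xi> * indicator {0..t} s \<partial>lborel) \<partial>lborel)"
    proof (rule nn_integral_mono_AE)
      have "AE s in lborel. s \<noteq> r" by (rule AE_lborel_singleton)
      moreover have "AE s in lborel. s \<noteq> t" by (rule AE_lborel_singleton)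
      ultimately show "AE s in lborel. (\<integral>\<^sup>+ x. ennreal ((Kg \<psi> (t - s) x - Kg \<psi> (r - s) (x::'a))\<^sup>2) \<partial>lborel) * indicator {0..t} s
          \<le> ennreal c1 * (\<integral>\<^sup>+ \<xi>. Q s \<xi> * indicator {0..t} s \<partial>lborel)"
      proof eventually_elim
        fix s assume sr: "s \<noteq> r" and st: "s \<noteq> t"
        show "(\<integral>\<^sup>+ x. ennreal ((Kg \<psi> (t - s) x - Kg \<psi> (r - s) (x::'a))\<^sup>2) \<partial>lborel) * indicator {0..t} s
          \<le> ennreal c1 * (\<integral>\<^sup>+ \<xi>. Q s \<xi> * indicator {0..t} s \<partial>lborel)"
        proof (cases "s \<in> {0..t}")
          case False then show ?thesis by simp
        next
          case True
          then have "0 < t - s" "r - s \<noteq> 0" using st sr by auto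
          from K_plancherel[OF this]
          show ?thesis using True unfolding Q_def c1_def by simp
        qed
      qed
    qed
    also have "\<dots> = ennreal c1 * (\<integral>\<^sup>+ s. (\<integral>\<^sup>+ \<xi>. Q s \<xi> * indicator {0..t} s \<partial>lborel) \<partial>lborel)"
      by (rule nn_integral_cmult) measurable
    also have "(\<integral>\<^sup>+ s. (\<integral>\<^sup>+ \<xi>. Q s \<xi> * indicator {0..t} s \<partial>(lborel::'a measure)) \<partial>lborel)
        = (\<integral>\<^sup>+ \<xi>. (\<integral>\<^sup>+ s. Q s \<xi> * indicator {0..t} s \<partial>lborel) \<partial>(lborel::'a measure))"
      by (rule lborel_pair.Fubini'[symmetric]) (rule Qm)
    also have "\<dots> \<le> (\<integral>\<^sup>+ \<xi>. ennreal (3 * (t - r) / (1 + (t - r) * \<psi> \<xi>)) \<partial>(lborel::'a measure))"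
      unfolding Q_def using rt by (intro nn_integral_mono s_bound \<psi>0) auto
    also have "\<dots> \<le> ennreal (C1 * (t - r) powr ((4 - real DIM('a)) / 4))"
      unfolding C1_def by (rule xi_bound) (use rt in auto)
    finally show "(\<integral>\<^sup>+ s \<in> {0..t}. (\<integral>\<^sup>+ x. ennreal ((Kg \<psi> (t - s) x - Kg \<psi> (r - s) (x::'a))\<^sup>2) \<partial>lborel) \<partial>lborel)
            \<le> ennreal (c1 * C1 * (t - r) powr ((4 - real DIM('a)) / 4))"
      using c10 C10 mono_c by (simp add: ennreal_mult mult.assoc)
  qed
qed

end

definition psiL :: "real ^ 'n \<Rightarrow> real" where
  "psiL \<xi> = (- 2 + (norm \<xi>)\<^sup>2)\<^sup>2 / 8"

definition psiS :: "real ^ 'n \<Rightarrow> real" where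
  "psiS \<xi> = (norm \<xi>)^4 / 8"

lemma K_LKS_eq: "K_LKS = Kg psiL"
proof (intro ext)
  fix t :: real and x :: "real ^ 'n"
  have e: "\<And>\<xi>. - (t / 8) * (- 2 + (norm \<xi>)\<^sup>2)\<^sup>2 = - t * psiL \<xi>"
    unfolding psiL_def by simp
  show "K_LKS t x = Kg psiL t x"
    unfolding K_LKS_def Kg_def by (simp only: e) simp
qed

lemma K_SFO_eq: "K_SFO = Kg psiS"
proof (intro ext)
  fix t :: real and x :: "real ^ 'n"
  have e: "\<And>\<xi>. - (t / 8) * (norm \<xi>)^4 = - t * psiS \<xi>"
    unfolding psiS_def by simp
  show "K_SFO t x = Kg psiS t x"
    unfolding K_SFO_def Kg_def by (simp only: e) simp
qed

lemma psiL_setup: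
  assumes "CARD('n::finite) \<le> 3"
  shows "psi_setup (psiL :: real ^ 'n \<Rightarrow> real) (1/32) 2"
proof
  show "(psiL :: real ^ 'n \<Rightarrow> real) \<in> borel_measurable borel" unfolding psiL_def by measurable
  show "\<And>\<xi>::real^'n. 0 \<le> psiL \<xi>" unfolding psiL_def by simp
  show "(0::real) < 1/32" by simp
  show "(0::real) \<le> 2" by simp
  show "DIM(real ^ 'n) \<le> 3" using assms by simp
  fix \<xi> :: "real ^ 'n" assume n: "2 \<le> norm \<xi>"
  define a where "a = (norm \<xi>)\<^sup>2"
  have a4: "a \<ge> 4" unfolding a_def using n power_mono[OF n, of 2] by simp
  have "a / 2 \<le> a - 2" using a4 by simp
  then have q: "(a / 2)\<^sup>2 \<le> (a - 2)\<^sup>2" using a4 by (intro power_mono) auto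
  have "(a / 2)\<^sup>2 = a\<^sup>2 / 4" by (simp add: power_divide)
  with q have q2: "a\<^sup>2 / 4 \<le> (a - 2)\<^sup>2" by simp
  have q3: "a\<^sup>2 / 4 / 8 \<le> (a - 2)\<^sup>2 / 8" by (rule divide_right_mono[OF q2]) simp
  have n4: "(norm \<xi>)^4 = a\<^sup>2" unfolding a_def by simp
  have "1/32 * (norm \<xi>)^4 = a\<^sup>2 / 4 / 8" unfolding n4 by simp
  also have "\<dots> \<le> (a - 2)\<^sup>2 / 8" by (rule q3)
  also have "(a - 2)\<^sup>2 / 8 = psiL \<xi>" unfolding psiL_def a_def by simp
  finally show "1/32 * (norm \<xi>)^4 \<le> psiL \<xi>" .
qed

lemma psiS_setup:
  assumes "CARD('n::finite) \<le> 3"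
  shows "psi_setup (psiS :: real ^ 'n \<Rightarrow> real) (1/8) 0"
proof
  show "(psiS :: real ^ 'n \<Rightarrow> real) \<in> borel_measurable borel" unfolding psiS_def by measurable
  show "\<And>\<xi>::real^'n. 0 \<le> psiS \<xi>" unfolding psiS_def by simp
  show "(0::real) < 1/8" by simp
  show "(0::real) \<le> 0" by simp
  show "DIM(real ^ 'n) \<le> 3" using assms by simp
  fix \<xi> :: "real ^ 'n"
  show "1/8 * (norm \<xi>)^4 \<le> psiS \<xi>" unfolding psiS_def by simp
qed

theorem lemma3p2:
  fixes T :: real
  assumes "T > 0"
    and "CARD('n::finite) \<in> {1, 2, 3}"
  shows "(\<exists>C::real. \<forall>r t. 0 < r \<and> r < t \<and> t \<le> T \<longrightarrow>
            (\<integral>\<^sup>+ s \<in> {0..t}. (\<integral>\<^sup>+ x.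
               ennreal ((K_LKS (t - s) (x :: real ^ 'n) - K_LKS (r - s) x)^2) \<partial>lborel) \<partial>lborel)
            \<le> ennreal (C * (t - r) powr ((4 - real CARD('n)) / 4)))
       \<and> (\<exists>C::real. \<forall>r t. 0 < r \<and> r < t \<and> t \<le> T \<longrightarrow>
            (\<integral>\<^sup>+ s \<in> {0..t}. (\<integral>\<^sup>+ x.
               ennreal ((K_SFO (t - s) (x :: real ^ 'n) - K_SFO (r - s) x)^2) \<partial>lborel) \<partial>lborel)
            \<le> ennreal (C * (t - r) powr ((4 - real CARD('n)) / 4)))"
proof -
  have c3: "CARD('n) \<le> 3" using assms(2) by auto
  have dc: "DIM(real ^ 'n) = CARD('n)" by simp
  note a = psi_setup.main_bound[OF psiL_setup[OF c3] assms(1), unfolded dc]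
  note b = psi_setup.main_bound[OF psiS_setup[OF c3] assms(1), unfolded dc]
  show ?thesis
    unfolding K_LKS_eq K_SFO_eq by (rule conjI[OF a b])
qed

end
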